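(* Let $(\mathcal S,\mathcal T)$ be a measurable space and let $y_n=(x_n,\xi_n,\rho_n)_{n\in\mathbb Z}$ be a Markov-modulated process as described in the context, with $R=\xi_0+\sum_{n=1}^\infty\xi_n\prod_{i=0}^{n-1}\rho_i$. For $x\in\mathcal S$ let $\Gamma(x)=\inf\{a\in\mathbb R: P_x^-(R\le a)>1/2\}$. Then for any $t>0$ and $z\in\mathcal S$, $$P_z^-(|R|\ge t)\ge\tfrac12\,P_z^-\big(|R_n+\Gamma(x_{n-1})\Pi_n|>t\ \text{for some }n\ge0\big),$$ where $\Pi_0=1$, $\Pi_n=\prod_{i=0}^{n-1}\rho_i$, $R_0=0$ and $R_n=\sum_{i=0}^{n-1}\xi_i\Pi_i$ for $n\ge1$.
   Context: $(x_n)_{n\in\mathbb Z}$ is a stationary Markov chain on $(\mathcal S,\mathcal T)$ with transition kernel $H$, and $(x_n,\xi_n,\rho_n)_{n\in\mathbb Z}$ with $(\xi_n,\rho_n)\in\mathbb R^2$ is a stationary Markov chain whose transitions depend only on the position of $(x_n)$: $P(x_n\in A,(\xi_n,\rho_n)\in B\mid\sigma((x_i,\xi_i,\rho_i):i<n))=\int_A H(x_{n-1},dy)\mathbb G(x_{n-1},y,B)$ with $\mathbb G(x,y,\cdot)=P((\xi_1,\rho_1)\in\cdot\mid x_0=x,x_1=y)$ a kernel. The series defining $R$ is assumed to converge almost surely (so that $R$ is defined). $P_x^-(\cdot)=P(\cdot\mid x_{-1}=x)$. *)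

theory Defs
  imports "HOL-Probability.Probability"
begin

definition proc_sigma ::
  "'w measure \<Rightarrow> 's measure \<Rightarrow> (int \<Rightarrow> 'w \<Rightarrow> 's) \<Rightarrow> (int \<Rightarrow> 'w \<Rightarrow> real)
     \<Rightarrow> (int \<Rightarrow> 'w \<Rightarrow> real) \<Rightarrow> int set \<Rightarrow> 'w measure" where
  "proc_sigma P S X Xi Rho I =
     sigma (space P)
       ({{\<omega> \<in> space P. X i \<omega> \<in> A} | i A. i \<in> I \<and> A \<in> sets S} \<union>
        {{\<omega> \<in> space P. (Xi i \<omega>, Rho i \<omega>) \<in> B} | i B.
            i \<in> I \<and> B \<in> sets (borel :: (real \<times> real) measure)})"

text \<open>Markov-modulated transition at time n under the probability measure P:
  P(X n \<in> A, (Xi n, Rho n) \<in> B | sigma(y_i : i < n))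
    = \<integral>_A H(X (n-1), dy) G(X (n-1), y, B),
  written via the defining identity of conditional probability
  (integrated over every event C of the past sigma-algebra).\<close>

definition markov_step ::
  "'w measure \<Rightarrow> 's measure \<Rightarrow> ('s \<Rightarrow> 's measure) \<Rightarrow> ('s \<Rightarrow> 's \<Rightarrow> (real \<times> real) measure)
     \<Rightarrow> (int \<Rightarrow> 'w \<Rightarrow> 's) \<Rightarrow> (int \<Rightarrow> 'w \<Rightarrow> real) \<Rightarrow> (int \<Rightarrow> 'w \<Rightarrow> real) \<Rightarrow> int \<Rightarrow> bool" where
  "markov_step P S H G X Xi Rho n \<longleftrightarrow>
     (\<forall>A \<in> sets S. \<forall>B \<in> sets (borel :: (real \<times> real) measure).
      \<forall>C \<in> sets (proc_sigma P S X Xi Rho {..<n}).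
        measure P ({\<omega> \<in> space P. X n \<omega> \<in> A \<and> (Xi n \<omega>, Rho n \<omega>) \<in> B} \<inter> C) =
        (\<integral>\<omega>. indicator C \<omega> *
              (\<integral>y. indicator A y * measure (G (X (n - 1) \<omega>) y) B \<partial>(H (X (n - 1) \<omega>))) \<partial>P))"

definition proc_shift ::
  "(int \<Rightarrow> 'w \<Rightarrow> 's) \<Rightarrow> (int \<Rightarrow> 'w \<Rightarrow> real) \<Rightarrow> (int \<Rightarrow> 'w \<Rightarrow> real) \<Rightarrow> int
     \<Rightarrow> 'w \<Rightarrow> int \<Rightarrow> 's \<times> real \<times> real" where
  "proc_shift X Xi Rho k \<omega> = (\<lambda>i. (X (i + k) \<omega>, Xi (i + k) \<omega>, Rho (i + k) \<omega>))"

definition PiR :: "(int \<Rightarrow> 'w \<Rightarrow> real) \<Rightarrow> nat \<Rightarrow> 'w \<Rightarrow> real" where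
  "PiR Rho n \<omega> = (\<Prod>i<n. Rho (int i) \<omega>)"

definition Rpart :: "(int \<Rightarrow> 'w \<Rightarrow> real) \<Rightarrow> (int \<Rightarrow> 'w \<Rightarrow> real) \<Rightarrow> nat \<Rightarrow> 'w \<Rightarrow> real" where
  "Rpart Xi Rho n \<omega> = (\<Sum>i<n. Xi (int i) \<omega> * PiR Rho i \<omega>)"

definition Rser_term :: "(int \<Rightarrow> 'w \<Rightarrow> real) \<Rightarrow> (int \<Rightarrow> 'w \<Rightarrow> real) \<Rightarrow> 'w \<Rightarrow> nat \<Rightarrow> real" where
  "Rser_term Xi Rho \<omega> n = Xi (int (n + 1)) \<omega> * PiR Rho (n + 1) \<omega>"

definition Rfull :: "(int \<Rightarrow> 'w \<Rightarrow> real) \<Rightarrow> (int \<Rightarrow> 'w \<Rightarrow> real) \<Rightarrow> 'w \<Rightarrow> real" where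
  "Rfull Xi Rho \<omega> = Xi 0 \<omega> + (\<Sum>n. Rser_term Xi Rho \<omega> n)"

definition Gam :: "('s \<Rightarrow> 'w measure) \<Rightarrow> ('w \<Rightarrow> real) \<Rightarrow> 's \<Rightarrow> real" where
  "Gam Pm R x = Inf {a::real. measure (Pm x) {\<omega> \<in> space (Pm x). R \<omega> \<le> a} > 1/2}"

end

theory Submission
  imports Defs
begin


definition Qk :: "('s \<Rightarrow> 's measure) \<Rightarrow> ('s \<Rightarrow> 's \<Rightarrow> (real \<times> real) measure) \<Rightarrow> 's measure \<Rightarrow> 's \<Rightarrow> ('s \<times> (real \<times> real)) measure" where
  "Qk H G S x = H x \<bind> (\<lambda>y. distr (G x y) (S \<Otimes>\<^sub>M borel) (\<lambda>b. (y, b)))"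

locale mmp =
  fixes P :: "'w measure" and S :: "'s measure"
    and X :: "int \<Rightarrow> 'w \<Rightarrow> 's" and Xi Rho :: "int \<Rightarrow> 'w \<Rightarrow> real"
    and H :: "'s \<Rightarrow> 's measure" and G :: "'s \<Rightarrow> 's \<Rightarrow> (real \<times> real) measure"
  assumes P: "prob_space P"
    and X_meas: "\<And>i. X i \<in> P \<rightarrow>\<^sub>M S"
    and Xi_meas: "\<And>i. Xi i \<in> borel_measurable P"
    and Rho_meas: "\<And>i. Rho i \<in> borel_measurable P"
    and H_kernel: "H \<in> S \<rightarrow>\<^sub>M prob_algebra S"
    and G_kernel: "(\<lambda>(x, y). G x y) \<in> S \<Otimes>\<^sub>M S \<rightarrow>\<^sub>M prob_algebra (borel :: (real \<times> real) measure)"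
    and mstep: "\<And>n. n \<ge> 0 \<Longrightarrow> markov_step P S H G X Xi Rho n"
begin

abbreviation "T \<equiv> S \<Otimes>\<^sub>M (borel :: (real \<times> real) measure)"
definition "F n = proc_sigma P S X Xi Rho {..<n}"
definition "Y k \<omega> = (X k \<omega>, (Xi k \<omega>, Rho k \<omega>))"
abbreviation "Q \<equiv> Qk H G S"

lemma gen_sub: "({{\<omega> \<in> space P. X i \<omega> \<in> A} | i A. i \<in> I \<and> A \<in> sets S} \<union>
        {{\<omega> \<in> space P. (Xi i \<omega>, Rho i \<omega>) \<in> B} | i B.
            i \<in> I \<and> B \<in> sets (borel :: (real \<times> real) measure)}) \<subseteq> Pow (space P)"
  by auto

lemma space_F[simp]: "space (F n) = space P"
  unfolding F_def proc_sigma_def by (simp add: space_measure_of_conv)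

lemma sets_F: "sets (F n) = sigma_sets (space P) ({{\<omega> \<in> space P. X i \<omega> \<in> A} | i A. i \<in> {..<n} \<and> A \<in> sets S} \<union>
        {{\<omega> \<in> space P. (Xi i \<omega>, Rho i \<omega>) \<in> B} | i B.
            i \<in> {..<n} \<and> B \<in> sets (borel :: (real \<times> real) measure)})"
  unfolding F_def proc_sigma_def by (rule sets_measure_of[OF gen_sub])

lemma XR_meas: "(\<lambda>\<omega>. (Xi i \<omega>, Rho i \<omega>)) \<in> borel_measurable P"
  using Xi_meas Rho_meas by measurable

lemma sets_F_sub: "sets (F n) \<subseteq> sets P"
  unfolding sets_F
proof (rule sets.sigma_sets_subset, safe)
  fix i A assume "A \<in> sets S"
  have "{\<omega> \<in> space P. X i \<omega> \<in> A} = X i -` A \<inter> space P" by auto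
  then show "{\<omega> \<in> space P. X i \<omega> \<in> A} \<in> sets P" using measurable_sets[OF X_meas \<open>A \<in> sets S\<close>] by simp
next
  fix i and B :: "(real \<times> real) set" assume "B \<in> sets borel"
  have "{\<omega> \<in> space P. (Xi i \<omega>, Rho i \<omega>) \<in> B} = (\<lambda>\<omega>. (Xi i \<omega>, Rho i \<omega>)) -` B \<inter> space P" by auto
  then show "{\<omega> \<in> space P. (Xi i \<omega>, Rho i \<omega>) \<in> B} \<in> sets P" using measurable_sets[OF XR_meas \<open>B \<in> sets borel\<close>] by simp
qed

end


lemma gen_mono: "I \<subseteq> J \<Longrightarrow> {f i A | i A. i \<in> I \<and> A \<in> K} \<subseteq> {f i A | i A. i \<in> J \<and> A \<in> K}"
  by blast
context mmp begin
lemma F_mono: "n \<le> n' \<Longrightarrow> sets (F n) \<subseteq> sets (F n')"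
  unfolding sets_F by (intro sigma_sets_mono' Un_mono gen_mono) auto

lemma subalg_F: "subalgebra P (F n)"
  unfolding subalgebra_def using sets_F_sub by simp

lemma X_F: assumes "i < n" shows "X i \<in> F n \<rightarrow>\<^sub>M S"
proof (rule measurableI)
  show "x \<in> space (F n) \<Longrightarrow> X i x \<in> space S" for x using measurable_space[OF X_meas] by auto
  fix A assume A: "A \<in> sets S"
  have "{\<omega> \<in> space P. X i \<omega> \<in> A} \<in> sets (F n)" unfolding sets_F 
    apply (rule sigma_sets.Basic) apply (rule UnI1) using assms A by auto
  moreover have "X i -` A \<inter> space (F n) = {\<omega> \<in> space P. X i \<omega> \<in> A}" by auto
  ultimately show "X i -` A \<inter> space (F n) \<in> sets (F n)" by simp
qed

lemma XR_F: assumes "i < n" shows "(\<lambda>\<omega>. (Xi i \<omega>, Rho i \<omega>)) \<in> F n \<rightarrow>\<^sub>M (borel :: (real \<times> real) measure)"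
proof (rule measurableI)
  fix A :: "(real \<times> real) set" assume A: "A \<in> sets borel"
  have "{\<omega> \<in> space P. (Xi i \<omega>, Rho i \<omega>) \<in> A} \<in> sets (F n)" unfolding sets_F
    apply (rule sigma_sets.Basic) apply (rule UnI2) using assms A by auto
  moreover have "(\<lambda>\<omega>. (Xi i \<omega>, Rho i \<omega>)) -` A \<inter> space (F n) = {\<omega> \<in> space P. (Xi i \<omega>, Rho i \<omega>) \<in> A}" by auto
  ultimately show "(\<lambda>\<omega>. (Xi i \<omega>, Rho i \<omega>)) -` A \<inter> space (F n) \<in> sets (F n)" by simp
qed simp

lemma Y_F: assumes "i < n" shows "Y i \<in> F n \<rightarrow>\<^sub>M T"
  unfolding Y_def using X_F[OF assms] XR_F[OF assms] by (rule measurable_Pair)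

lemma Y_meas: "Y i \<in> P \<rightarrow>\<^sub>M T"
  by (rule measurable_from_subalg[OF subalg_F Y_F[of i "i+1"]]) simp

lemma XR_F': "i < n \<Longrightarrow> (\<lambda>\<omega>. (Xi i \<omega>, Rho i \<omega>)) \<in> F n \<rightarrow>\<^sub>M (borel \<Otimes>\<^sub>M borel)"
  using XR_F by (simp only: borel_prod)

lemma Xi_F: "i < n \<Longrightarrow> Xi i \<in> borel_measurable (F n)"
  using measurable_compose[OF XR_F' measurable_fst] by simp
lemma Rho_F: "i < n \<Longrightarrow> Rho i \<in> borel_measurable (F n)"
  using measurable_compose[OF XR_F' measurable_snd] by simp
end


context mmp begin

lemma H_prob: "x \<in> space S \<Longrightarrow> prob_space (H x)"
  using measurable_space[OF H_kernel] by (auto simp: space_prob_algebra)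
lemma sets_H: "x \<in> space S \<Longrightarrow> sets (H x) = sets S"
  using measurable_space[OF H_kernel] by (auto simp: space_prob_algebra)
lemma G_prob: "x \<in> space S \<Longrightarrow> y \<in> space S \<Longrightarrow> prob_space (G x y)"
  using measurable_space[OF G_kernel, of "(x,y)"] by (auto simp: space_prob_algebra space_pair_measure)
lemma sets_G: "x \<in> space S \<Longrightarrow> y \<in> space S \<Longrightarrow> sets (G x y) = sets borel"
  using measurable_space[OF G_kernel, of "(x,y)"] by (auto simp: space_prob_algebra space_pair_measure)
lemma space_G: "x \<in> space S \<Longrightarrow> y \<in> space S \<Longrightarrow> space (G x y) = UNIV"
  using sets_eq_imp_space_eq[OF sets_G] by simp

lemma H_sub[measurable]: "H \<in> S \<rightarrow>\<^sub>M subprob_algebra S"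
  by (rule measurable_prob_algebraD[OF H_kernel])
lemma G_sub[measurable]: "(\<lambda>(x, y). G x y) \<in> S \<Otimes>\<^sub>M S \<rightarrow>\<^sub>M subprob_algebra (borel :: (real \<times> real) measure)"
  by (rule measurable_prob_algebraD[OF G_kernel])

lemma Qker: "(\<lambda>(x, y). distr (G x y) T (\<lambda>b. (y, b))) \<in> S \<Otimes>\<^sub>M S \<rightarrow>\<^sub>M subprob_algebra T"
proof -
  have "(\<lambda>xy. distr ((\<lambda>(x, y). G x y) xy) T (\<lambda>b. (snd xy, b))) \<in> S \<Otimes>\<^sub>M S \<rightarrow>\<^sub>M subprob_algebra T"
    by (rule measurable_distr2[OF _ G_sub]) measurable
  then show ?thesis by (simp add: case_prod_beta')
qed

lemma Q_meas[measurable]: "Q \<in> S \<rightarrow>\<^sub>M subprob_algebra T"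
proof -
  have "(\<lambda>x. H x \<bind> (\<lambda>y. distr (G x y) T (\<lambda>b. (y, b)))) \<in> S \<rightarrow>\<^sub>M subprob_algebra T"
    by (rule measurable_bind'[OF H_sub]) (simp add: Qker)
  then show ?thesis unfolding Qk_def[abs_def] .
qed

lemma sets_Q: "x \<in> space S \<Longrightarrow> sets (Q x) = sets T"
  by (rule sets_kernel[OF Q_meas])

lemma Q_rect: assumes x: "x \<in> space S" and A: "A \<in> sets S" and B: "B \<in> sets (borel :: (real \<times> real) measure)"
  shows "emeasure (Q x) (A \<times> B) = (\<integral>\<^sup>+ y. indicator A y * emeasure (G x y) B \<partial>H x)"
proof -
  have k: "(\<lambda>y. distr (G x y) T (\<lambda>b. (y, b))) \<in> H x \<rightarrow>\<^sub>M subprob_algebra T"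
    using measurable_Pair2[OF Qker x] by (subst measurable_cong_sets[OF sets_H[OF x] refl]) simp
  have ne: "space (H x) \<noteq> {}" using prob_space.not_empty[OF H_prob[OF x]] .
  have AB: "A \<times> B \<in> sets T" using A B by simp
  have "emeasure (Q x) (A \<times> B) = (\<integral>\<^sup>+ y. emeasure (distr (G x y) T (\<lambda>b. (y, b))) (A \<times> B) \<partial>H x)"
    unfolding Qk_def by (rule emeasure_bind[OF ne k AB])
  also have "\<dots> = (\<integral>\<^sup>+ y. indicator A y * emeasure (G x y) B \<partial>H x)"
  proof (rule nn_integral_cong)
    fix y assume "y \<in> space (H x)"
    then have y: "y \<in> space S" using sets_eq_imp_space_eq[OF sets_H[OF x]] by simp
    have m: "(\<lambda>b. (y, b)) \<in> G x y \<rightarrow>\<^sub>M T"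
      using y by (subst measurable_cong_sets[OF sets_G[OF x y] refl]) measurable
    have "emeasure (distr (G x y) T (\<lambda>b. (y, b))) (A \<times> B) = emeasure (G x y) ((\<lambda>b. (y, b)) -` (A \<times> B) \<inter> space (G x y))"
      by (rule emeasure_distr[OF m AB])
    also have "\<dots> = indicator A y * emeasure (G x y) B"
      using space_G[OF x y] by (auto simp: indicator_def)
    finally show "emeasure (distr (G x y) T (\<lambda>b. (y, b))) (A \<times> B) = indicator A y * emeasure (G x y) B" .
  qed
  finally show ?thesis .
qed

lemma Q_rect_real: assumes x: "x \<in> space S" and A: "A \<in> sets S" and B: "B \<in> sets (borel :: (real \<times> real) measure)"
  shows "emeasure (Q x) (A \<times> B) = ennreal (\<integral> y. indicator A y * measure (G x y) B \<partial>H x)"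
proof -
  interpret Hx: prob_space "H x" by (rule H_prob[OF x])
  have gm: "(\<lambda>y. measure (G x y) B) \<in> borel_measurable (H x)"
  proof -
    have "(\<lambda>y. measure (G x y) B) \<in> borel_measurable S"
      using measurable_Pair2[OF G_sub x] B by (intro measure_measurable_subprob_algebra2[where N=borel]) (auto simp: measurable_ident_sets)
    then show ?thesis by (subst measurable_cong_sets[OF sets_H[OF x] refl])
  qed
  have Am: "indicator A \<in> borel_measurable (H x)" using A by (subst measurable_cong_sets[OF sets_H[OF x] refl]) simp
  have fm: "(\<lambda>y. indicator A y * measure (G x y) B) \<in> borel_measurable (H x)"
    by (intro borel_measurable_times Am gm)
  have bd: "AE y in H x. norm (indicator A y * measure (G x y) B) \<le> (1::real)"
  proof (rule AE_I2)
    fix y assume "y \<in> space (H x)"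
    then have y: "y \<in> space S" using sets_eq_imp_space_eq[OF sets_H[OF x]] by simp
    interpret Gy: prob_space "G x y" by (rule G_prob[OF x y])
    show "norm (indicator A y * measure (G x y) B) \<le> (1::real)" by (auto simp: indicator_def)
  qed
  have int: "integrable (H x) (\<lambda>y. indicator A y * measure (G x y) B)"
    by (rule Hx.integrable_const_bound[OF bd fm])
  have "ennreal (\<integral> y. indicator A y * measure (G x y) B \<partial>H x) = (\<integral>\<^sup>+ y. ennreal (indicator A y * measure (G x y) B) \<partial>H x)"
    by (rule nn_integral_eq_integral[OF int, symmetric]) auto
  also have "\<dots> = (\<integral>\<^sup>+ y. indicator A y * emeasure (G x y) B \<partial>H x)"
  proof (rule nn_integral_cong)
    fix y assume "y \<in> space (H x)"
    then have y: "y \<in> space S" using sets_eq_imp_space_eq[OF sets_H[OF x]] by simp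
    interpret Gy: prob_space "G x y" by (rule G_prob[OF x y])
    show "ennreal (indicator A y * measure (G x y) B) = indicator A y * emeasure (G x y) B"
      by (simp add: Gy.emeasure_eq_measure indicator_def)
  qed
  finally show ?thesis using Q_rect[OF assms] by simp
qed

end


context mmp begin

lemma XP[measurable]: "X i \<in> P \<rightarrow>\<^sub>M S" by (rule X_meas)
lemma YP[measurable]: "Y i \<in> P \<rightarrow>\<^sub>M T" by (rule Y_meas)

lemma QX_meas[measurable]: "(\<lambda>\<omega>. Q (X i \<omega>)) \<in> P \<rightarrow>\<^sub>M subprob_algebra T"
  by measurable

lemma Qsub: "x \<in> space S \<Longrightarrow> subprob_space (Q x)"
  using measurable_space[OF Q_meas] by (auto simp: space_subprob_algebra)

lemma XS: "\<omega> \<in> space P \<Longrightarrow> X i \<omega> \<in> space S"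
  using measurable_space[OF X_meas] by auto

lemma Collect_meas: "f \<in> M \<rightarrow>\<^sub>M N \<Longrightarrow> D \<in> sets N \<Longrightarrow> {x\<in>space M. f x \<in> D} \<in> sets M"
proof -
  assume f: "f \<in> M \<rightarrow>\<^sub>M N" and D: "D \<in> sets N"
  have "{x\<in>space M. f x \<in> D} = f -` D \<inter> space M" by auto
  then show ?thesis using measurable_sets[OF f D] by simp
qed

lemma P_ne: "space P \<noteq> {}" using prob_space.not_empty[OF P] .

lemma density_ind: assumes "C \<in> sets P" "D \<in> sets P"
  shows "emeasure (density P (indicator C)) D = emeasure P (C \<inter> D)"
  using assms by (simp add: emeasure_density indicator_inter_arith[symmetric] del: nn_integral_indicator)
     (simp add: nn_integral_indicator[symmetric] sets.Int del: nn_integral_indicator)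

lemma ML1: assumes k: "k \<ge> 0" and C: "C \<in> sets (F k)" and b: "b \<in> sets T"
  shows "emeasure P (C \<inter> {\<omega> \<in> space P. Y k \<omega> \<in> b}) = (\<integral>\<^sup>+\<omega>. indicator C \<omega> * emeasure (Q (X (k - 1) \<omega>)) b \<partial>P)"
proof -
  interpret prob_space P by (rule P)
  have CP: "C \<in> sets P" using C sets_F_sub by auto
  define PC where "PC = density P (indicator C)"
  have sPC: "sets PC = sets P" "space PC = space P" unfolding PC_def by auto
  have kerPC: "(\<lambda>\<omega>. Q (X (k - 1) \<omega>)) \<in> PC \<rightarrow>\<^sub>M subprob_algebra T"
    by (subst measurable_cong_sets[OF sPC(1) refl]) simp
  define \<mu>1 where "\<mu>1 = distr PC T (Y k)"
  define \<mu>2 where "\<mu>2 = PC \<bind> (\<lambda>\<omega>. Q (X (k - 1) \<omega>))"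
  have YPC: "Y k \<in> PC \<rightarrow>\<^sub>M T" by (subst measurable_cong_sets[OF sPC(1) refl]) simp
  have e1: "emeasure \<mu>1 D = emeasure P (C \<inter> {\<omega> \<in> space P. Y k \<omega> \<in> D})" if D: "D \<in> sets T" for D
  proof -
    have "emeasure \<mu>1 D = emeasure PC (Y k -` D \<inter> space PC)" unfolding \<mu>1_def by (rule emeasure_distr[OF YPC D])
    also have "Y k -` D \<inter> space PC = {\<omega> \<in> space P. Y k \<omega> \<in> D}" using sPC by auto
    also have "emeasure PC {\<omega> \<in> space P. Y k \<omega> \<in> D} = emeasure P (C \<inter> {\<omega> \<in> space P. Y k \<omega> \<in> D})"
      unfolding PC_def using D by (intro density_ind CP Collect_meas[OF Y_meas])
    finally show ?thesis .
  qed
  have e2: "emeasure \<mu>2 D = (\<integral>\<^sup>+\<omega>. indicator C \<omega> * emeasure (Q (X (k - 1) \<omega>)) D \<partial>P)" if D: "D \<in> sets T" for D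
  proof -
    have "emeasure \<mu>2 D = (\<integral>\<^sup>+\<omega>. emeasure (Q (X (k - 1) \<omega>)) D \<partial>PC)"
      unfolding \<mu>2_def using P_ne sPC by (intro emeasure_bind[where N=T] kerPC D) auto
    also have "\<dots> = (\<integral>\<^sup>+\<omega>. indicator C \<omega> * emeasure (Q (X (k - 1) \<omega>)) D \<partial>P)"
      unfolding PC_def using D CP by (subst nn_integral_density) auto
    finally show ?thesis .
  qed
  have "\<mu>1 = \<mu>2"
  proof (rule measure_eqI_generator_eq[where E="{a \<times> b | a b. a \<in> sets S \<and> b \<in> sets (borel :: (real \<times> real) measure)}"
        and \<Omega>="space S \<times> space (borel :: (real \<times> real) measure)" and A="\<lambda>_. space S \<times> space (borel :: (real \<times> real) measure)"])
    show "Int_stable {a \<times> b | a b. a \<in> sets S \<and> b \<in> sets (borel :: (real \<times> real) measure)}"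
      by (rule Int_stable_pair_measure_generator)
    show "{a \<times> b | a b. a \<in> sets S \<and> b \<in> sets (borel :: (real \<times> real) measure)} \<subseteq> Pow (space S \<times> space borel)"
      using sets.sets_into_space by fastforce
    show "sets \<mu>1 = sigma_sets (space S \<times> space borel) {a \<times> b | a b. a \<in> sets S \<and> b \<in> sets (borel :: (real \<times> real) measure)}"
      unfolding \<mu>1_def by (simp add: sets_pair_measure)
    show "sets \<mu>2 = sigma_sets (space S \<times> space borel) {a \<times> b | a b. a \<in> sets S \<and> b \<in> sets (borel :: (real \<times> real) measure)}"
    proof -
      have "\<And>\<omega>. \<omega> \<in> space PC \<Longrightarrow> sets (Q (X (k-1) \<omega>)) = sets T" using sPC by (simp add: sets_Q XS)
      then show ?thesis unfolding \<mu>2_def 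
        by (subst sets_bind[where N=T]) (use P_ne sPC in \<open>auto simp: sets_pair_measure\<close>)
    qed
    show "range (\<lambda>_. space S \<times> space (borel :: (real \<times> real) measure)) \<subseteq> {a \<times> b | a b. a \<in> sets S \<and> b \<in> sets (borel :: (real \<times> real) measure)}"
      by blast
    show "(\<Union>i::nat. space S \<times> space (borel :: (real \<times> real) measure)) = space S \<times> space borel" by simp
    show "emeasure \<mu>1 (space S \<times> space (borel :: (real \<times> real) measure)) \<noteq> \<infinity>" for i :: nat
      using e1[of "space S \<times> space borel"] emeasure_finite by (simp add: space_pair_measure[symmetric])
    fix R assume "R \<in> {a \<times> b | a b. a \<in> sets S \<and> b \<in> sets (borel :: (real \<times> real) measure)}"
    then obtain A B where R: "R = A \<times> B" and A: "A \<in> sets S" and B: "B \<in> sets (borel :: (real \<times> real) measure)" by blast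
    have RT: "R \<in> sets T" using A B R by simp
    define gq where "gq x = enn2real (emeasure (Q x) (A \<times> B))" for x
    have gq_meas[measurable]: "gq \<in> borel_measurable S" unfolding gq_def using A B by measurable
    have gq_eq: "gq x = (\<integral> y. indicator A y * measure (G x y) B \<partial>H x)" and gq_nn: "gq x \<ge> 0" and gq_le: "gq x \<le> 1"
      if x: "x \<in> space S" for x
    proof -
      have nn: "(\<integral> y. indicator A y * measure (G x y) B \<partial>H x) \<ge> 0"
        by (intro integral_nonneg_AE AE_I2) auto
      show "gq x = (\<integral> y. indicator A y * measure (G x y) B \<partial>H x)"
        unfolding gq_def Q_rect_real[OF x A B] using nn by simp
      show "gq x \<ge> 0" unfolding gq_def by simp
      interpret Qx: subprob_space "Q x" by (rule Qsub[OF x])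
      show "gq x \<le> 1" unfolding gq_def using Qx.subprob_emeasure_le_1[of "A \<times> B"]
        by (simp add: Qx.emeasure_eq_measure)
    qed
    have "emeasure \<mu>1 R = emeasure P (C \<inter> {\<omega> \<in> space P. Y k \<omega> \<in> R})" by (rule e1[OF RT])
    also have "\<dots> = emeasure P ({\<omega> \<in> space P. X k \<omega> \<in> A \<and> (Xi k \<omega>, Rho k \<omega>) \<in> B} \<inter> C)"
      by (intro arg_cong[where f="emeasure P"]) (auto simp: Y_def R)
    also have "\<dots> = ennreal (measure P ({\<omega> \<in> space P. X k \<omega> \<in> A \<and> (Xi k \<omega>, Rho k \<omega>) \<in> B} \<inter> C))"
      by (simp add: emeasure_eq_measure)
    also have "measure P ({\<omega> \<in> space P. X k \<omega> \<in> A \<and> (Xi k \<omega>, Rho k \<omega>) \<in> B} \<inter> C) =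
        (\<integral>\<omega>. indicator C \<omega> * (\<integral>y. indicator A y * measure (G (X (k - 1) \<omega>) y) B \<partial>(H (X (k - 1) \<omega>))) \<partial>P)"
      using mstep[OF k] A B C unfolding markov_step_def F_def by blast
    also have "\<dots> = (\<integral>\<omega>. indicator C \<omega> * gq (X (k - 1) \<omega>) \<partial>P)"
      by (rule Bochner_Integration.integral_cong) (simp_all add: gq_eq[OF XS])
    also have "ennreal \<dots> = (\<integral>\<^sup>+\<omega>. ennreal (indicator C \<omega> * gq (X (k - 1) \<omega>)) \<partial>P)"
    proof (rule nn_integral_eq_integral[symmetric])
      show "integrable P (\<lambda>\<omega>. indicator C \<omega> * gq (X (k - 1) \<omega>))"
      proof (rule integrable_const_bound[where B=1])
        show "(\<lambda>\<omega>. indicator C \<omega> * gq (X (k - 1) \<omega>)) \<in> borel_measurable P"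
          by (intro borel_measurable_times borel_measurable_indicator CP measurable_compose[OF X_meas gq_meas])
      qed (auto intro!: AE_I2 simp: indicator_def gq_le gq_nn XS abs_le_iff)
      show "AE x in P. 0 \<le> indicator C x * gq (X (k - 1) x)"
        by (auto intro!: AE_I2 simp: gq_nn XS)
    qed
    also have "\<dots> = (\<integral>\<^sup>+\<omega>. indicator C \<omega> * emeasure (Q (X (k - 1) \<omega>)) R \<partial>P)"
    proof (rule nn_integral_cong)
      fix \<omega> assume "\<omega> \<in> space P"
      then have x: "X (k - 1) \<omega> \<in> space S" by (rule XS)
      interpret Qx: subprob_space "Q (X (k - 1) \<omega>)" by (rule Qsub[OF x])
      show "ennreal (indicator C \<omega> * gq (X (k - 1) \<omega>)) = indicator C \<omega> * emeasure (Q (X (k - 1) \<omega>)) R"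
        unfolding gq_def R by (simp add: Qx.emeasure_eq_measure indicator_def)
    qed
    also have "\<dots> = emeasure \<mu>2 R" using e2[OF RT] by simp
    finally show "emeasure \<mu>1 R = emeasure \<mu>2 R" .
  qed
  then show ?thesis using e1[OF b] e2[OF b] by simp
qed

end


context mmp begin

lemma id_F: "(\<lambda>\<omega>. \<omega>) \<in> P \<rightarrow>\<^sub>M F k"
proof (rule measurableI)
  fix A assume "A \<in> sets (F k)"
  moreover then have "A \<subseteq> space P" using sets.sets_into_space by fastforce
  ultimately show "(\<lambda>\<omega>. \<omega>) -` A \<inter> space P \<in> sets P" using sets_F_sub by auto
qed simp

lemma MS: assumes k: "k \<ge> 0" and g: "(\<lambda>(\<omega>, y). g \<omega> y) \<in> borel_measurable (F k \<Otimes>\<^sub>M T)"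
  shows "(\<integral>\<^sup>+\<omega>. g \<omega> (Y k \<omega>) \<partial>P) = (\<integral>\<^sup>+\<omega>. (\<integral>\<^sup>+y. g \<omega> y \<partial>Q (X (k - 1) \<omega>)) \<partial>P)"
proof -
  interpret prob_space P by (rule P)
  have pm: "(\<lambda>\<omega>. (\<omega>, Y k \<omega>)) \<in> P \<rightarrow>\<^sub>M F k \<Otimes>\<^sub>M T"
    by (rule measurable_Pair[OF id_F Y_meas])
  have idPT: "(\<lambda>(\<omega>, y). (\<omega>, y)) \<in> P \<Otimes>\<^sub>M T \<rightarrow>\<^sub>M F k \<Otimes>\<^sub>M T"
  proof -
    have "(\<lambda>z. (fst z, snd z)) \<in> P \<Otimes>\<^sub>M T \<rightarrow>\<^sub>M F k \<Otimes>\<^sub>M T"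
      by (rule measurable_Pair[OF measurable_compose[OF measurable_fst id_F] measurable_snd])
    then show ?thesis by (simp add: case_prod_beta')
  qed
  have ker: "(\<lambda>\<omega>. distr (Q (X (k - 1) \<omega>)) (F k \<Otimes>\<^sub>M T) (\<lambda>y. (\<omega>, y))) \<in> P \<rightarrow>\<^sub>M subprob_algebra (F k \<Otimes>\<^sub>M T)"
    by (rule measurable_distr2[OF idPT QX_meas])
  have sQ: "\<omega> \<in> space P \<Longrightarrow> sets (Q (X (k - 1) \<omega>)) = sets T" for \<omega> by (simp add: sets_Q XS)
  have Pair_m: "\<omega> \<in> space P \<Longrightarrow> (\<lambda>y. (\<omega>, y)) \<in> Q (X (k - 1) \<omega>) \<rightarrow>\<^sub>M F k \<Otimes>\<^sub>M T" for \<omega>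
    by (subst measurable_cong_sets[OF sQ refl]) (auto intro: measurable_Pair1')
  define \<nu>1 where "\<nu>1 = distr P (F k \<Otimes>\<^sub>M T) (\<lambda>\<omega>. (\<omega>, Y k \<omega>))"
  define \<nu>2 where "\<nu>2 = P \<bind> (\<lambda>\<omega>. distr (Q (X (k - 1) \<omega>)) (F k \<Otimes>\<^sub>M T) (\<lambda>y. (\<omega>, y)))"
  have "\<nu>1 = \<nu>2"
  proof (rule measure_eqI_generator_eq[where E="{a \<times> b | a b. a \<in> sets (F k) \<and> b \<in> sets T}"
        and \<Omega>="space (F k) \<times> space T" and A="\<lambda>_. space (F k) \<times> space T"])
    show "Int_stable {a \<times> b | a b. a \<in> sets (F k) \<and> b \<in> sets T}"
      by (rule Int_stable_pair_measure_generator)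
    show "{a \<times> b | a b. a \<in> sets (F k) \<and> b \<in> sets T} \<subseteq> Pow (space (F k) \<times> space T)"
    proof
      fix z assume "z \<in> {a \<times> b | a b. a \<in> sets (F k) \<and> b \<in> sets T}"
      then obtain a b where "z = a \<times> b" "a \<in> sets (F k)" "b \<in> sets T" by auto
      then show "z \<in> Pow (space (F k) \<times> space T)" using sets.sets_into_space[of a "F k"] sets.sets_into_space[of b T] by auto
    qed
    show "sets \<nu>1 = sigma_sets (space (F k) \<times> space T) {a \<times> b | a b. a \<in> sets (F k) \<and> b \<in> sets T}"
      unfolding \<nu>1_def by (simp only: sets_distr sets_pair_measure)
    show "sets \<nu>2 = sigma_sets (space (F k) \<times> space T) {a \<times> b | a b. a \<in> sets (F k) \<and> b \<in> sets T}"
      unfolding \<nu>2_def by (subst sets_bind[where N="F k \<Otimes>\<^sub>M T"]) (use P_ne in \<open>auto simp only: sets_distr sets_pair_measure\<close>)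
    have "space (F k) \<times> space T \<in> {a \<times> b | a b. a \<in> sets (F k) \<and> b \<in> sets T}"
      apply (rule CollectI) apply (rule exI[of _ "space (F k)"]) apply (rule exI[of _ "space T"]) using sets.top[of "F k"] sets.top[of T] by (simp del: space_F)
    then show "range (\<lambda>_. space (F k) \<times> space T) \<subseteq> {a \<times> b | a b. a \<in> sets (F k) \<and> b \<in> sets T}"
      by auto
    show "(\<Union>i::nat. space (F k) \<times> space T) = space (F k) \<times> space T" by simp
    show "emeasure \<nu>1 (space (F k) \<times> space T) \<noteq> \<infinity>" for i :: nat
    proof -
      have \<Omega>: "space (F k) \<times> space T \<in> sets (F k \<Otimes>\<^sub>M T)" by (rule pair_measureI) (rule sets.top)+
      show ?thesis unfolding \<nu>1_def emeasure_distr[OF pm \<Omega>] by (simp add: emeasure_eq_measure)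
    qed
    fix R assume "R \<in> {a \<times> b | a b. a \<in> sets (F k) \<and> b \<in> sets T}"
    then obtain a b where R: "R = a \<times> b" and a: "a \<in> sets (F k)" and b: "b \<in> sets T" by blast
    have RT: "R \<in> sets (F k \<Otimes>\<^sub>M T)" unfolding R by (rule pair_measureI[OF a b])
    have "emeasure \<nu>1 R = emeasure P ((\<lambda>\<omega>. (\<omega>, Y k \<omega>)) -` R \<inter> space P)"
      unfolding \<nu>1_def by (rule emeasure_distr[OF pm RT])
    also have "(\<lambda>\<omega>. (\<omega>, Y k \<omega>)) -` R \<inter> space P = a \<inter> {\<omega> \<in> space P. Y k \<omega> \<in> b}"
      using R sets.sets_into_space[OF a] by auto
    also have "emeasure P (a \<inter> {\<omega> \<in> space P. Y k \<omega> \<in> b}) = (\<integral>\<^sup>+\<omega>. indicator a \<omega> * emeasure (Q (X (k - 1) \<omega>)) b \<partial>P)"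
      by (rule ML1[OF k a b])
    also have "\<dots> = (\<integral>\<^sup>+\<omega>. emeasure (distr (Q (X (k - 1) \<omega>)) (F k \<Otimes>\<^sub>M T) (\<lambda>y. (\<omega>, y))) R \<partial>P)"
    proof (rule nn_integral_cong)
      fix \<omega> assume w: "\<omega> \<in> space P"
      have "emeasure (distr (Q (X (k - 1) \<omega>)) (F k \<Otimes>\<^sub>M T) (\<lambda>y. (\<omega>, y))) R = 
          emeasure (Q (X (k - 1) \<omega>)) ((\<lambda>y. (\<omega>, y)) -` R \<inter> space (Q (X (k - 1) \<omega>)))"
        by (rule emeasure_distr[OF Pair_m[OF w] RT])
      also have "space (Q (X (k - 1) \<omega>)) = space T" using sets_eq_imp_space_eq[OF sQ[OF w]] .
      also have "(\<lambda>y. (\<omega>, y)) -` R \<inter> space T = (if \<omega> \<in> a then b else {})"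
        using R sets.sets_into_space[OF b] by auto
      finally show "indicator a \<omega> * emeasure (Q (X (k - 1) \<omega>)) b = emeasure (distr (Q (X (k - 1) \<omega>)) (F k \<Otimes>\<^sub>M T) (\<lambda>y. (\<omega>, y))) R"
        by (simp add: indicator_def)
    qed
    also have "\<dots> = emeasure \<nu>2 R"
      unfolding \<nu>2_def by (rule emeasure_bind[OF P_ne ker RT, symmetric])
    finally show "emeasure \<nu>1 R = emeasure \<nu>2 R" .
  qed
  have "(\<integral>\<^sup>+\<omega>. g \<omega> (Y k \<omega>) \<partial>P) = (\<integral>\<^sup>+z. (\<lambda>(\<omega>, y). g \<omega> y) z \<partial>\<nu>1)"
    unfolding \<nu>1_def by (subst nn_integral_distr[OF pm]) (simp_all add: g)
  also have "\<dots> = (\<integral>\<^sup>+z. (\<lambda>(\<omega>, y). g \<omega> y) z \<partial>\<nu>2)" using \<open>\<nu>1 = \<nu>2\<close> by simp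
  also have "\<dots> = (\<integral>\<^sup>+\<omega>. (\<integral>\<^sup>+z. (\<lambda>(\<omega>, y). g \<omega> y) z \<partial>distr (Q (X (k - 1) \<omega>)) (F k \<Otimes>\<^sub>M T) (\<lambda>y. (\<omega>, y))) \<partial>P)"
    unfolding \<nu>2_def by (rule nn_integral_bind[OF g ker])
  also have "\<dots> = (\<integral>\<^sup>+\<omega>. (\<integral>\<^sup>+y. g \<omega> y \<partial>Q (X (k - 1) \<omega>)) \<partial>P)"
  proof (rule nn_integral_cong)
    fix \<omega> assume w: "\<omega> \<in> space P"
    show "(\<integral>\<^sup>+z. (\<lambda>(\<omega>, y). g \<omega> y) z \<partial>distr (Q (X (k - 1) \<omega>)) (F k \<Otimes>\<^sub>M T) (\<lambda>y. (\<omega>, y))) = (\<integral>\<^sup>+y. g \<omega> y \<partial>Q (X (k - 1) \<omega>))"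
      by (subst nn_integral_distr[OF Pair_m[OF w]]) (simp_all add: g)
  qed
  finally show ?thesis .
qed

end



definition lastX :: "'s \<Rightarrow> (nat \<Rightarrow> 's \<times> 'b) \<Rightarrow> nat \<Rightarrow> 's" where
  "lastX x v m = (if m = 0 then x else fst (v (m - 1)))"

fun Iop :: "('s \<Rightarrow> ('s \<times> 'b) measure) \<Rightarrow> nat \<Rightarrow> ((nat \<Rightarrow> 's \<times> 'b) \<Rightarrow> ennreal) \<Rightarrow> 's \<Rightarrow> ennreal" where
  "Iop K 0 h x = h (\<lambda>_. undefined)"
| "Iop K (Suc m) h x = Iop K m (\<lambda>v. \<integral>\<^sup>+y. h (v(m := y)) \<partial>K (lastX x v m)) x"

context mmp begin

abbreviation "PT (m::nat) \<equiv> PiM {..<m} (\<lambda>_. T)"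

lemma upd_meas: "(\<lambda>(v, y). v(m := y)) \<in> PT m \<Otimes>\<^sub>M T \<rightarrow>\<^sub>M PT (Suc m)"
proof -
  have eq: "(\<lambda>(v, y). v(m := y)) = (\<lambda>z i. fun_upd (fst z) m (snd z) i)" by (simp add: fun_eq_iff case_prod_beta')
  show ?thesis unfolding eq
  proof (rule measurable_PiM_single')
    fix i assume i: "i \<in> {..<Suc m}"
    show "(\<lambda>z. fun_upd (fst z) m (snd z) i) \<in> PT m \<Otimes>\<^sub>M T \<rightarrow>\<^sub>M T"
    proof (cases "i = m")
      case True then show ?thesis by simp
    next
      case False then have "i \<in> {..<m}" using i by auto
      then have "(\<lambda>z. fst z i) \<in> PT m \<Otimes>\<^sub>M T \<rightarrow>\<^sub>M T"
        by (intro measurable_compose[OF measurable_fst measurable_component_singleton])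
      then show ?thesis using False by simp
    qed
  next
    show "(\<lambda>z i. fun_upd (fst z) m (snd z) i) \<in> space (PT m \<Otimes>\<^sub>M T) \<rightarrow> (\<Pi>\<^sub>E i\<in>{..<Suc m}. space T)"
      by (auto simp: space_pair_measure space_PiM PiE_def Pi_def extensional_def)
  qed
qed

lemma lastX_meas: assumes st: "st \<in> N \<rightarrow>\<^sub>M S"
  shows "(\<lambda>(\<omega>, v). lastX (st \<omega>) v m) \<in> N \<Otimes>\<^sub>M PT m \<rightarrow>\<^sub>M S"
proof (cases "m = 0")
  case True
  then show ?thesis unfolding lastX_def using measurable_compose[OF measurable_fst st] by (simp add: case_prod_beta')
next
  case False
  then have i: "m - 1 \<in> {..<m}" by auto
  have "(\<lambda>z. fst (snd z (m - 1))) \<in> N \<Otimes>\<^sub>M PT m \<rightarrow>\<^sub>M S"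
    by (intro measurable_compose[OF measurable_snd] measurable_compose[OF measurable_component_singleton[OF i]] measurable_fst)
  then show ?thesis unfolding lastX_def using False by (simp add: case_prod_beta')
qed

lemma step_meas: assumes st: "st \<in> N \<rightarrow>\<^sub>M S"
  and g: "(\<lambda>(\<omega>, v). g \<omega> v) \<in> borel_measurable (N \<Otimes>\<^sub>M PT (Suc m))"
  shows "(\<lambda>(\<omega>, v). \<integral>\<^sup>+y. g \<omega> (v(m := y)) \<partial>Q (lastX (st \<omega>) v m)) \<in> borel_measurable (N \<Otimes>\<^sub>M PT m)"
proof -
  have L: "(\<lambda>z. Q ((\<lambda>(\<omega>, v). lastX (st \<omega>) v m) z)) \<in> N \<Otimes>\<^sub>M PT m \<rightarrow>\<^sub>M subprob_algebra T"
    by (rule measurable_compose[OF lastX_meas[OF st] Q_meas])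
  have mp: "(\<lambda>(z, y). (fst z, (snd z)(m := y))) \<in> (N \<Otimes>\<^sub>M PT m) \<Otimes>\<^sub>M T \<rightarrow>\<^sub>M N \<Otimes>\<^sub>M PT (Suc m)"
  proof -
    have "(\<lambda>zy. (fst (fst zy), (\<lambda>(v, y). v(m := y)) (snd (fst zy), snd zy))) \<in> (N \<Otimes>\<^sub>M PT m) \<Otimes>\<^sub>M T \<rightarrow>\<^sub>M N \<Otimes>\<^sub>M PT (Suc m)"
      by (intro measurable_Pair measurable_compose[OF _ upd_meas]) measurable
    then show ?thesis by (simp add: case_prod_beta')
  qed
  have f: "(\<lambda>(z, y). (\<lambda>(\<omega>, v). g \<omega> v) (fst z, (snd z)(m := y))) \<in> borel_measurable ((N \<Otimes>\<^sub>M PT m) \<Otimes>\<^sub>M T)"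
    using measurable_compose[OF mp g] by (simp add: case_prod_beta')
  have "(\<lambda>z. integral\<^sup>N (Q ((\<lambda>(\<omega>, v). lastX (st \<omega>) v m) z)) (\<lambda>y. (\<lambda>(\<omega>, v). g \<omega> v) (fst z, (snd z)(m := y)))) \<in> borel_measurable (N \<Otimes>\<^sub>M PT m)"
    by (rule nn_integral_measurable_subprob_algebra2[OF _ L]) (use f in \<open>simp add: case_prod_beta'\<close>)
  then show ?thesis by (simp add: case_prod_beta')
qed

lemma Iop_meas: assumes st: "st \<in> N \<rightarrow>\<^sub>M S"
  shows "(\<lambda>(\<omega>, v). g \<omega> v) \<in> borel_measurable (N \<Otimes>\<^sub>M PT m) \<Longrightarrow> (\<lambda>\<omega>. Iop Q m (g \<omega>) (st \<omega>)) \<in> borel_measurable N"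
proof (induction m arbitrary: g)
  case 0
  have c: "(\<lambda>_. undefined) \<in> space (PT 0)" by (auto simp: space_PiM PiE_def extensional_def)
  have "(\<lambda>\<omega>. (\<lambda>(\<omega>, v). g \<omega> v) (\<omega>, (\<lambda>_. undefined))) \<in> borel_measurable N"
    using measurable_compose[OF measurable_Pair2'[OF c] "0"] by simp
  then show ?case by simp
next
  case (Suc m)
  have "(\<lambda>\<omega>. Iop Q m (\<lambda>v. \<integral>\<^sup>+y. g \<omega> (v(m := y)) \<partial>Q (lastX (st \<omega>) v m)) (st \<omega>)) \<in> borel_measurable N"
    by (rule Suc.IH[OF step_meas[OF st Suc.prems]])
  then show ?case by simp
qed

lemma QM: assumes n: "n \<ge> 0"
  shows "(\<lambda>(\<omega>, v). g \<omega> v) \<in> borel_measurable (F n \<Otimes>\<^sub>M PT m) \<Longrightarrow>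
    (\<integral>\<^sup>+\<omega>. g \<omega> (restrict (\<lambda>k. Y (n + int k) \<omega>) {..<m}) \<partial>P) = (\<integral>\<^sup>+\<omega>. Iop Q m (g \<omega>) (X (n - 1) \<omega>) \<partial>P)"
proof (induction m arbitrary: g)
  case 0
  then show ?case by (simp add: restrict_def)
next
  case (Suc m)
  define Yn where "Yn \<omega> = restrict (\<lambda>k. Y (n + int k) \<omega>) {..<m}" for \<omega>
  have Yn_meas: "Yn \<in> F (n + int m) \<rightarrow>\<^sub>M PT m"
    unfolding Yn_def by (rule measurable_restrict) (rule Y_F, simp)
  have idF: "(\<lambda>\<omega>. \<omega>) \<in> F (n + int m) \<rightarrow>\<^sub>M F n"
  proof (rule measurableI)
    fix A assume "A \<in> sets (F n)"
    moreover then have "A \<subseteq> space P" using sets.sets_into_space by fastforce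
    ultimately show "(\<lambda>\<omega>. \<omega>) -` A \<inter> space (F (n + int m)) \<in> sets (F (n + int m))" using F_mono[of n "n + int m"] by auto
  qed simp
  have eq1: "restrict (\<lambda>k. Y (n + int k) \<omega>) {..<Suc m} = (Yn \<omega>)(m := Y (n + int m) \<omega>)" for \<omega>
    unfolding Yn_def by (auto simp: restrict_def fun_eq_iff)
  have gm: "(\<lambda>(\<omega>, y). g \<omega> ((Yn \<omega>)(m := y))) \<in> borel_measurable (F (n + int m) \<Otimes>\<^sub>M T)"
  proof -
    have mp: "(\<lambda>z. (fst z, (\<lambda>(v, y). v(m := y)) (Yn (fst z), snd z))) \<in> F (n + int m) \<Otimes>\<^sub>M T \<rightarrow>\<^sub>M F n \<Otimes>\<^sub>M PT (Suc m)"
      by (intro measurable_Pair measurable_compose[OF _ upd_meas] measurable_compose[OF measurable_fst idF]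
            measurable_compose[OF measurable_fst Yn_meas] measurable_snd)
    show ?thesis using measurable_compose[OF mp Suc.prems] by (simp add: case_prod_beta')
  qed
  have "(\<integral>\<^sup>+\<omega>. g \<omega> (restrict (\<lambda>k. Y (n + int k) \<omega>) {..<Suc m}) \<partial>P) = (\<integral>\<^sup>+\<omega>. g \<omega> ((Yn \<omega>)(m := Y (n + int m) \<omega>)) \<partial>P)"
    by (simp add: eq1)
  also have "\<dots> = (\<integral>\<^sup>+\<omega>. (\<integral>\<^sup>+y. g \<omega> ((Yn \<omega>)(m := y)) \<partial>Q (X (n + int m - 1) \<omega>)) \<partial>P)"
    using MS[OF _ gm] n by simp
  also have "\<dots> = (\<integral>\<^sup>+\<omega>. (\<lambda>\<omega> v. \<integral>\<^sup>+y. g \<omega> (v(m := y)) \<partial>Q (lastX (X (n - 1) \<omega>) v m)) \<omega> (Yn \<omega>) \<partial>P)"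
  proof (rule nn_integral_cong)
    fix \<omega> 
    have "lastX (X (n - 1) \<omega>) (Yn \<omega>) m = X (n + int m - 1) \<omega>"
    proof (cases "m = 0")
      case False
      then show ?thesis using False unfolding lastX_def Yn_def Y_def by (simp add: add_diff_eq)
    qed (simp add: lastX_def)
    then show "(\<integral>\<^sup>+y. g \<omega> ((Yn \<omega>)(m := y)) \<partial>Q (X (n + int m - 1) \<omega>)) = (\<lambda>\<omega> v. \<integral>\<^sup>+y. g \<omega> (v(m := y)) \<partial>Q (lastX (X (n - 1) \<omega>) v m)) \<omega> (Yn \<omega>)"
      by simp
  qed
  also have "\<dots> = (\<integral>\<^sup>+\<omega>. Iop Q m ((\<lambda>\<omega> v. \<integral>\<^sup>+y. g \<omega> (v(m := y)) \<partial>Q (lastX (X (n - 1) \<omega>) v m)) \<omega>) (X (n - 1) \<omega>) \<partial>P)"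
    unfolding Yn_def
    by (rule Suc.IH) (rule step_meas[OF X_F Suc.prems], simp)
  also have "\<dots> = (\<integral>\<^sup>+\<omega>. Iop Q (Suc m) (g \<omega>) (X (n - 1) \<omega>) \<partial>P)" by simp
  finally show ?case .
qed

end



lemma gam_props:
  fixes N :: "'w measure" and R :: "'w \<Rightarrow> real"
  assumes N: "prob_space N" and R: "R \<in> borel_measurable N"
  defines "Aset \<equiv> {a. measure N {\<omega>\<in>space N. R \<omega> \<le> a} > 1/2}"
  shows "Aset \<noteq> {}" "bdd_below Aset" "\<And>a b. a \<in> Aset \<Longrightarrow> a \<le> b \<Longrightarrow> b \<in> Aset"
    "measure N {\<omega>\<in>space N. R \<omega> \<le> Inf Aset} \<ge> 1/2"
    "measure N {\<omega>\<in>space N. Inf Aset \<le> R \<omega>} \<ge> 1/2"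
proof -
  interpret prob_space N by (rule N)
  define Fd where "Fd a = measure N {\<omega>\<in>space N. R \<omega> \<le> a}" for a
  have Fs: "{\<omega>\<in>space N. R \<omega> \<le> a} \<in> sets N" for a using R by measurable
  have mono: "a \<le> b \<Longrightarrow> Fd a \<le> Fd b" for a b
    unfolding Fd_def by (intro finite_measure_mono Fs) auto
  show up: "\<And>a b. a \<in> Aset \<Longrightarrow> a \<le> b \<Longrightarrow> b \<in> Aset"
    unfolding Aset_def using mono unfolding Fd_def by fastforce
  have lim1: "(\<lambda>n. Fd (real n)) \<longlonglongrightarrow> 1"
  proof -
    have "(\<lambda>n. measure N {\<omega>\<in>space N. R \<omega> \<le> real n}) \<longlonglongrightarrow> measure N (\<Union>n. {\<omega>\<in>space N. R \<omega> \<le> real n})"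
      by (rule finite_Lim_measure_incseq) (auto simp: Fs incseq_def)
    moreover have "(\<Union>n. {\<omega>\<in>space N. R \<omega> \<le> real n}) = space N"
      by (auto intro: real_arch_simple)
    ultimately show ?thesis unfolding Fd_def by (simp add: prob_space)
  qed
  have lim0: "(\<lambda>n. Fd (- real n)) \<longlonglongrightarrow> 0"
  proof -
    have "(\<lambda>n. measure N {\<omega>\<in>space N. R \<omega> \<le> - real n}) \<longlonglongrightarrow> measure N (\<Inter>n. {\<omega>\<in>space N. R \<omega> \<le> - real n})"
      by (rule finite_Lim_measure_decseq) (auto simp: Fs decseq_def)
    moreover have "(\<Inter>n. {\<omega>\<in>space N. R \<omega> \<le> - real n}) = {}"
    proof -
      have "\<not> (\<forall>n. R \<omega> \<le> - real n)" for \<omega>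
      proof
        assume a: "\<forall>n. R \<omega> \<le> - real n"
        obtain n where n: "- R \<omega> < real n" using reals_Archimedean2 by blast
        from a[rule_format, of n] n show False by linarith
      qed
      then show ?thesis by auto
    qed
    ultimately show ?thesis unfolding Fd_def by simp
  qed
  have "\<forall>\<^sub>F n in sequentially. Fd (real n) > 1/2" by (rule order_tendstoD(1)[OF lim1]) simp
  then obtain n1 where n1: "Fd (real n1) > 1/2" by (auto simp: eventually_sequentially)
  then show ne: "Aset \<noteq> {}" unfolding Aset_def Fd_def by auto
  have "\<forall>\<^sub>F n in sequentially. Fd (- real n) < 1/2" by (rule order_tendstoD(2)[OF lim0]) simp
  then obtain n0 where n0: "Fd (- real n0) < 1/2" by (auto simp: eventually_sequentially)
  have lb: "- real n0 \<le> a" if "a \<in> Aset" for a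
  proof (rule ccontr)
    assume "\<not> - real n0 \<le> a"
    then have "Fd a \<le> Fd (- real n0)" by (intro mono) simp
    with n0 that show False unfolding Aset_def Fd_def by simp
  qed
  then show bdd: "bdd_below Aset" by (rule bdd_belowI)
  define \<Gamma> where "\<Gamma> = Inf Aset"
  have gt: "\<Gamma> + 1 / real (Suc j) \<in> Aset" for j
  proof -
    have "\<Gamma> < \<Gamma> + 1 / real (Suc j)" by simp
    then obtain a where "a \<in> Aset" "a < \<Gamma> + 1 / real (Suc j)" using cInf_less_iff[OF ne bdd] unfolding \<Gamma>_def by blast
    then show ?thesis using up by auto
  qed
  have lt: "\<Gamma> - 1 / real (Suc j) \<notin> Aset" for j
  proof
    assume "\<Gamma> - 1 / real (Suc j) \<in> Aset"
    then have "\<Gamma> \<le> \<Gamma> - 1 / real (Suc j)" unfolding \<Gamma>_def by (rule cInf_lower[OF _ bdd])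
    then show False by simp
  qed
  have "(\<lambda>j. measure N {\<omega>\<in>space N. R \<omega> \<le> \<Gamma> + 1 / real (Suc j)}) \<longlonglongrightarrow> measure N (\<Inter>j. {\<omega>\<in>space N. R \<omega> \<le> \<Gamma> + 1 / real (Suc j)})"
    by (rule finite_Lim_measure_decseq) (auto simp: Fs decseq_def frac_le intro: order.trans)
  moreover have "(\<Inter>j. {\<omega>\<in>space N. R \<omega> \<le> \<Gamma> + 1 / real (Suc j)}) = {\<omega>\<in>space N. R \<omega> \<le> \<Gamma>}"
  proof (intro equalityI subsetI)
    fix \<omega> assume "\<omega> \<in> (\<Inter>j. {\<omega>\<in>space N. R \<omega> \<le> \<Gamma> + 1 / real (Suc j)})"
    then have h: "\<And>j. R \<omega> \<le> \<Gamma> + 1 / real (Suc j)" and w: "\<omega> \<in> space N" by auto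
    have "R \<omega> \<le> \<Gamma>"
    proof (rule ccontr)
      assume "\<not> R \<omega> \<le> \<Gamma>"
      then obtain j where "inverse (real (Suc j)) < R \<omega> - \<Gamma>" using reals_Archimedean[of "R \<omega> - \<Gamma>"] by auto
      with h[of j] show False by (simp add: inverse_eq_divide)
    qed
    then show "\<omega> \<in> {\<omega>\<in>space N. R \<omega> \<le> \<Gamma>}" using w by simp
  next
    fix \<omega> assume "\<omega> \<in> {\<omega>\<in>space N. R \<omega> \<le> \<Gamma>}"
    moreover have "0 \<le> 1 / real (Suc j)" for j by simp
    ultimately show "\<omega> \<in> (\<Inter>j. {\<omega>\<in>space N. R \<omega> \<le> \<Gamma> + 1 / real (Suc j)})" by (auto intro: order.trans)
  qed
  ultimately have l1: "(\<lambda>j. measure N {\<omega>\<in>space N. R \<omega> \<le> \<Gamma> + 1 / real (Suc j)}) \<longlonglongrightarrow> measure N {\<omega>\<in>space N. R \<omega> \<le> \<Gamma>}" by simp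
  show "measure N {\<omega>\<in>space N. R \<omega> \<le> Inf Aset} \<ge> 1/2"
    unfolding \<Gamma>_def[symmetric]
    by (rule LIMSEQ_le_const[OF l1]) (use gt in \<open>auto simp: Aset_def less_imp_le\<close>)
  have "(\<lambda>j. measure N {\<omega>\<in>space N. R \<omega> \<le> \<Gamma> - 1 / real (Suc j)}) \<longlonglongrightarrow> measure N (\<Union>j. {\<omega>\<in>space N. R \<omega> \<le> \<Gamma> - 1 / real (Suc j)})"
    by (rule finite_Lim_measure_incseq) (auto simp: Fs incseq_def frac_le intro: order.trans)
  moreover have "(\<Union>j. {\<omega>\<in>space N. R \<omega> \<le> \<Gamma> - 1 / real (Suc j)}) = {\<omega>\<in>space N. R \<omega> < \<Gamma>}"
  proof (safe)
    fix \<omega> assume "\<omega> \<in> space N" "R \<omega> < \<Gamma>"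
    then obtain j where "inverse (real (Suc j)) < \<Gamma> - R \<omega>" using reals_Archimedean[of "\<Gamma> - R \<omega>"] by auto
    then have "R \<omega> \<le> \<Gamma> - 1 / real (Suc j)" by (simp add: inverse_eq_divide)
    then show "\<omega> \<in> (\<Union>j. {\<omega>\<in>space N. R \<omega> \<le> \<Gamma> - 1 / real (Suc j)})" using \<open>\<omega> \<in> space N\<close> by force
  next
    fix \<omega> j assume "R \<omega> \<le> \<Gamma> - 1 / real (Suc j)"
    moreover have "0 < 1 / real (Suc j)" by simp
    ultimately show "R \<omega> < \<Gamma>" by linarith
  qed
  ultimately have l2: "(\<lambda>j. measure N {\<omega>\<in>space N. R \<omega> \<le> \<Gamma> - 1 / real (Suc j)}) \<longlonglongrightarrow> measure N {\<omega>\<in>space N. R \<omega> < \<Gamma>}" by simp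
  have "measure N {\<omega>\<in>space N. R \<omega> < \<Gamma>} \<le> 1/2"
    by (rule LIMSEQ_le_const2[OF l2]) (use lt in \<open>auto simp: Aset_def not_less\<close>)
  moreover have "measure N {\<omega>\<in>space N. \<Gamma> \<le> R \<omega>} = 1 - measure N {\<omega>\<in>space N. R \<omega> < \<Gamma>}"
  proof -
    have "{\<omega>\<in>space N. \<Gamma> \<le> R \<omega>} = space N - {\<omega>\<in>space N. R \<omega> < \<Gamma>}" by auto
    moreover have "{\<omega>\<in>space N. R \<omega> < \<Gamma>} \<in> sets N" using R by measurable
    ultimately show ?thesis by (simp add: prob_compl)
  qed
  ultimately show "measure N {\<omega>\<in>space N. Inf Aset \<le> R \<omega>} \<ge> 1/2" unfolding \<Gamma>_def by simp
qed



definition Sm :: "nat \<Rightarrow> (nat \<Rightarrow> 's \<times> real \<times> real) \<Rightarrow> real" where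
  "Sm m v = (\<Sum>i<m. fst (snd (v i)) * (\<Prod>j<i. snd (snd (v j))))"

lemma Sm_restrict: "Sm m (restrict f {..<m}) = (\<Sum>i<m. fst (snd (f i)) * (\<Prod>j<i. snd (snd (f j))))"
  unfolding Sm_def by (intro sum.cong refl arg_cong2[where f="(*)"] prod.cong) auto

lemma PiR_add: "PiR Rho (n + m) \<omega> = PiR Rho n \<omega> * (\<Prod>j<m. Rho (int n + int j) \<omega>)"
  by (induction m) (auto simp: PiR_def ac_simps)

lemma Rpart_decomp: "Rpart Xi Rho (n + m) \<omega> = Rpart Xi Rho n \<omega> + PiR Rho n \<omega> *
    (\<Sum>i<m. Xi (int n + int i) \<omega> * (\<Prod>j<i. Rho (int n + int j) \<omega>))"
proof (induction m)
  case 0 then show ?case by (simp add: Rpart_def)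
next
  case (Suc m)
  have "Rpart Xi Rho (n + Suc m) \<omega> = Rpart Xi Rho (n + m) \<omega> + Xi (int (n + m)) \<omega> * PiR Rho (n + m) \<omega>"
    by (simp add: Rpart_def)
  also have "PiR Rho (n + m) \<omega> = PiR Rho n \<omega> * (\<Prod>j<m. Rho (int n + int j) \<omega>)" by (rule PiR_add)
  also note Suc
  finally show ?case by (simp add: distrib_left mult.assoc mult.commute mult.left_commute)
qed

lemma PiR_0[simp]: "PiR Rho 0 \<omega> = 1" by (simp add: PiR_def)
lemma Rpart_0[simp]: "Rpart Xi Rho 0 \<omega> = 0" by (simp add: Rpart_def)

lemma Rpart_lim: assumes "summable (Rser_term Xi Rho \<omega>)"
  shows "(\<lambda>m. Rpart Xi Rho m \<omega>) \<longlonglongrightarrow> Rfull Xi Rho \<omega>"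
proof -
  have eq: "Rpart Xi Rho (Suc m) \<omega> = Xi 0 \<omega> + (\<Sum>i<m. Rser_term Xi Rho \<omega> i)" for m
    unfolding Rpart_def Rser_term_def sum.lessThan_Suc_shift by simp
  have "(\<lambda>m. Xi 0 \<omega> + (\<Sum>i<m. Rser_term Xi Rho \<omega> i)) \<longlonglongrightarrow> Xi 0 \<omega> + (\<Sum>i. Rser_term Xi Rho \<omega> i)"
    by (intro tendsto_add tendsto_const summable_LIMSEQ assms)
  then have "(\<lambda>m. Rpart Xi Rho (Suc m) \<omega>) \<longlonglongrightarrow> Rfull Xi Rho \<omega>" unfolding eq Rfull_def .
  then show ?thesis by (rule LIMSEQ_imp_Suc)
qed

lemma PiR_zero_mono: "PiR Rho k \<omega> = 0 \<Longrightarrow> k \<le> j \<Longrightarrow> PiR Rho j \<omega> = 0"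
  using PiR_add[of Rho k "j - k" \<omega>] by simp

lemma Rfull_PiR0: assumes "PiR Rho k \<omega> = 0" shows "Rfull Xi Rho \<omega> = Rpart Xi Rho k \<omega>"
proof -
  have z: "Rser_term Xi Rho \<omega> i = 0" if "i \<notin> {..<k}" for i
    using PiR_zero_mono[OF assms, of "i+1"] that by (simp add: Rser_term_def)
  have "summable (Rser_term Xi Rho \<omega>)"
    by (rule sums_summable[OF sums_finite[of "{..<k}", OF _ z]]) auto
  then have l: "(\<lambda>m. Rpart Xi Rho m \<omega>) \<longlonglongrightarrow> Rfull Xi Rho \<omega>" by (rule Rpart_lim)
  have "Rpart Xi Rho (k + m) \<omega> = Rpart Xi Rho k \<omega>" for m
    using Rpart_decomp[of Xi Rho k m \<omega>] assms by simp
  then have "(\<lambda>m. Rpart Xi Rho (m + k) \<omega>) \<longlonglongrightarrow> Rpart Xi Rho k \<omega>" by (simp add: add.commute)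
  then have "(\<lambda>m. Rpart Xi Rho m \<omega>) \<longlonglongrightarrow> Rpart Xi Rho k \<omega>" by (rule LIMSEQ_offset)
  then show ?thesis using l LIMSEQ_unique by blast
qed

lemma Iop_zero: "Iop K m (\<lambda>v. 0) x = 0"
  by (induction m) auto

lemma Iop_ind: "Iop K m (\<lambda>v. indicator C \<omega> * h v) x = indicator C \<omega> * Iop K m h x"
  by (cases "\<omega> \<in> C") (simp_all add: Iop_zero)

context mmp begin

lemma Sm_Y: "Sm m (restrict (\<lambda>k. Y (int n + int k) \<omega>) {..<m}) = (\<Sum>i<m. Xi (int n + int i) \<omega> * (\<Prod>j<i. Rho (int n + int j) \<omega>))"
  unfolding Sm_restrict by (simp add: Y_def)

lemma decomp: "Rpart Xi Rho (n + m) \<omega> = Rpart Xi Rho n \<omega> + PiR Rho n \<omega> * Sm m (restrict (\<lambda>k. Y (int n + int k) \<omega>) {..<m})"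
  unfolding Sm_Y by (rule Rpart_decomp)

lemma Rpart_Sm: "Rpart Xi Rho m \<omega> = Sm m (restrict (\<lambda>k. Y (0 + int k) \<omega>) {..<m})"
  using decomp[of 0 m \<omega>] by simp

lemma xi_T[measurable]: "(\<lambda>z. fst (snd z)) \<in> borel_measurable T"
proof -
  have "(fst :: real \<times> real \<Rightarrow> real) \<in> borel_measurable (borel :: (real \<times> real) measure)"
    using measurable_fst[of "borel::real measure" "borel::real measure"] by (simp add: borel_prod)
  then show ?thesis using measurable_compose[OF measurable_snd] by blast
qed
lemma rho_T[measurable]: "(\<lambda>z. snd (snd z)) \<in> borel_measurable T"
proof -
  have "(snd :: real \<times> real \<Rightarrow> real) \<in> borel_measurable (borel :: (real \<times> real) measure)"
    using measurable_snd[of "borel::real measure" "borel::real measure"] by (simp add: borel_prod)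
  then show ?thesis using measurable_compose[OF measurable_snd] by blast
qed

lemma Sm_meas[measurable]: "Sm m \<in> borel_measurable (PT m)"
  unfolding Sm_def
proof (intro borel_measurable_sum borel_measurable_times borel_measurable_prod)
  fix i assume i: "i \<in> {..<m}"
  show "(\<lambda>v. fst (snd (v i))) \<in> borel_measurable (PT m)"
    by (rule measurable_compose[OF measurable_component_singleton[OF i] xi_T])
next
  fix i j assume "i \<in> {..<m}" "j \<in> {..<i}"
  then have j: "j \<in> {..<m}" by auto
  show "(\<lambda>v. snd (snd (v j))) \<in> borel_measurable (PT m)"
    by (rule measurable_compose[OF measurable_component_singleton[OF j] rho_T])
qed

end


context mmp begin

lemma Iop_val: assumes x: "x \<in> space S" and AEx: "AE \<omega> in P. X (-1) \<omega> = x"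
  and h: "h \<in> borel_measurable (PT m)"
  shows "Iop Q m h x = (\<integral>\<^sup>+\<omega>. h (restrict (\<lambda>k. Y (0 + int k) \<omega>) {..<m}) \<partial>P)"
proof -
  interpret prob_space P by (rule P)
  have g: "(\<lambda>(\<omega>, v). (\<lambda>\<omega>. h) \<omega> v) \<in> borel_measurable (F 0 \<Otimes>\<^sub>M PT m)"
    using measurable_compose[OF measurable_snd h] by (simp add: case_prod_beta')
  have "(\<integral>\<^sup>+\<omega>. h (restrict (\<lambda>k. Y (0 + int k) \<omega>) {..<m}) \<partial>P) = (\<integral>\<^sup>+\<omega>. Iop Q m h (X (0 - 1) \<omega>) \<partial>P)"
    using QM[of 0 "\<lambda>\<omega>. h" m] g by simp
  also have "\<dots> = (\<integral>\<^sup>+\<omega>. Iop Q m h x \<partial>P)"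
    by (rule nn_integral_cong_AE) (use AEx in auto)
  also have "\<dots> = Iop Q m h x" by (simp add: emeasure_space_1)
  finally show ?thesis ..
qed

lemma K_px: assumes x: "x \<in> space S" and AEx: "AE \<omega> in P. X (-1) \<omega> = x"
  and conv: "AE \<omega> in P. (\<lambda>m. Rpart Xi Rho m \<omega>) \<longlonglongrightarrow> Rf \<omega>"
  and Rf: "Rf \<in> borel_measurable P" and \<delta>: "\<delta> > 0"
  shows "emeasure P {\<omega> \<in> space P. \<sigma> * c \<le> \<sigma> * Rf \<omega>} \<le> liminf (\<lambda>m. Iop Q m (indicator {v. \<sigma> * c - \<delta> \<le> \<sigma> * Sm m v}) x)"
proof -
  interpret prob_space P by (rule P)
  have Xi_P[measurable]: "Xi i \<in> borel_measurable P" for i by (rule Xi_meas)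
  have Rho_P[measurable]: "Rho i \<in> borel_measurable P" for i by (rule Rho_meas)
  have Rp[measurable]: "(\<lambda>\<omega>. Rpart Xi Rho m \<omega>) \<in> borel_measurable P" for m
    unfolding Rpart_def PiR_def by measurable
  define u where "u m \<omega> = (indicator {\<omega> \<in> space P. \<sigma> * c - \<delta> \<le> \<sigma> * Rpart Xi Rho m \<omega>} \<omega> :: ennreal)" for m \<omega>
  have u_meas: "u m \<in> borel_measurable P" for m unfolding u_def by measurable
  have hm: "indicator {v. \<sigma> * c - \<delta> \<le> \<sigma> * Sm m v} \<in> borel_measurable (PT m)" for m
  proof -
    have eq: "(indicator {v. \<sigma> * c - \<delta> \<le> \<sigma> * Sm m v} :: _ \<Rightarrow> ennreal) = (\<lambda>v. if \<sigma> * c - \<delta> \<le> \<sigma> * Sm m v then 1 else 0)"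
      by (auto simp: fun_eq_iff indicator_def)
    show ?thesis unfolding eq by measurable
  qed
  have Iv: "Iop Q m (indicator {v. \<sigma> * c - \<delta> \<le> \<sigma> * Sm m v}) x = (\<integral>\<^sup>+\<omega>. u m \<omega> \<partial>P)" for m
    unfolding Iop_val[OF x AEx hm] u_def by (intro nn_integral_cong) (simp add: Rpart_Sm indicator_def)
  have "emeasure P {\<omega> \<in> space P. \<sigma> * c \<le> \<sigma> * Rf \<omega>} = (\<integral>\<^sup>+\<omega>. indicator {\<omega> \<in> space P. \<sigma> * c \<le> \<sigma> * Rf \<omega>} \<omega> \<partial>P)"
    using Rf by (intro nn_integral_indicator[symmetric]) measurable
  also have "\<dots> \<le> (\<integral>\<^sup>+\<omega>. liminf (\<lambda>m. u m \<omega>) \<partial>P)"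
  proof (rule nn_integral_mono_AE)
    show "AE \<omega> in P. indicator {\<omega> \<in> space P. \<sigma> * c \<le> \<sigma> * Rf \<omega>} \<omega> \<le> liminf (\<lambda>m. u m \<omega>)"
      using conv
    proof (eventually_elim)
      case (elim \<omega>)
      show ?case
      proof (cases "\<omega> \<in> space P \<and> \<sigma> * c \<le> \<sigma> * Rf \<omega>")
        case True
        have "(\<lambda>m. \<sigma> * Rpart Xi Rho m \<omega>) \<longlonglongrightarrow> \<sigma> * Rf \<omega>" by (intro tendsto_mult_left elim)
        moreover have "\<sigma> * c - \<delta> < \<sigma> * Rf \<omega>" using True \<delta> by simp
        ultimately have ev: "\<forall>\<^sub>F m in sequentially. \<sigma> * c - \<delta> < \<sigma> * Rpart Xi Rho m \<omega>" by (rule order_tendstoD(1))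
        have "1 \<le> liminf (\<lambda>m. u m \<omega>)"
          by (rule Liminf_bounded) (use ev True in \<open>auto simp: u_def elim!: eventually_mono\<close>)
        then show ?thesis using True by simp
      next
        case False then show ?thesis by (auto simp: indicator_def)
      qed
    qed
  qed
  also have "\<dots> \<le> liminf (\<lambda>m. \<integral>\<^sup>+\<omega>. u m \<omega> \<partial>P)" by (rule nn_integral_liminf[OF u_meas])
  also have "\<dots> = liminf (\<lambda>m. Iop Q m (indicator {v. \<sigma> * c - \<delta> \<le> \<sigma> * Sm m v}) x)" by (simp add: Iv)
  finally show ?thesis .
qed

end


context mmp begin

lemma K_main: fixes n :: nat and \<sigma> :: real and c L :: "'w \<Rightarrow> real"
  assumes C: "C \<in> sets (F (int n))" and c: "c \<in> borel_measurable (F (int n))"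
    and L: "L \<in> borel_measurable P"
    and conv: "AE \<omega> in P. \<omega> \<in> C \<longrightarrow> (\<lambda>m. Sm m (restrict (\<lambda>k. Y (int n + int k) \<omega>) {..<m})) \<longlonglongrightarrow> L \<omega>"
    and hyp: "\<And>\<omega> \<delta>. \<omega> \<in> space P \<Longrightarrow> \<omega> \<in> C \<Longrightarrow> \<delta> > 0 \<Longrightarrow>
        1/2 \<le> liminf (\<lambda>m. Iop Q m (indicator {v. \<sigma> * c \<omega> - \<delta> \<le> \<sigma> * Sm m v}) (X (int n - 1) \<omega>))"
  shows "1/2 * emeasure P C \<le> emeasure P {\<omega> \<in> C. \<sigma> * c \<omega> \<le> \<sigma> * L \<omega>}"
proof -
  interpret prob_space P by (rule P)
  have CP: "C \<in> sets P" using C sets_F_sub by auto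
  have cP: "c \<in> borel_measurable P" by (rule measurable_from_subalg[OF subalg_F c])
  have CS: "C \<subseteq> space P" using sets.sets_into_space[OF CP] .
  have Eset: "{\<omega> \<in> C. \<sigma> * c \<omega> - \<delta> \<le> \<sigma> * L \<omega>} \<in> sets P" for \<delta>
  proof -
    have "{\<omega> \<in> space P. \<sigma> * c \<omega> - \<delta> \<le> \<sigma> * L \<omega>} \<in> sets P" using cP L by measurable
    then have "C \<inter> {\<omega> \<in> space P. \<sigma> * c \<omega> - \<delta> \<le> \<sigma> * L \<omega>} \<in> sets P" using CP by auto
    moreover have "C \<inter> {\<omega> \<in> space P. \<sigma> * c \<omega> - \<delta> \<le> \<sigma> * L \<omega>} = {\<omega> \<in> C. \<sigma> * c \<omega> - \<delta> \<le> \<sigma> * L \<omega>}" using CS by auto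
    ultimately show ?thesis by simp
  qed
  have step: "1/2 * emeasure P C \<le> emeasure P {\<omega> \<in> C. \<sigma> * c \<omega> - \<delta> \<le> \<sigma> * L \<omega>}" if \<delta>: "\<delta> > 0" for \<delta>
  proof -
    define g :: "nat \<Rightarrow> 'w \<Rightarrow> (nat \<Rightarrow> 's \<times> real \<times> real) \<Rightarrow> ennreal" where "g m \<omega> v = (indicator C \<omega> * indicator {v. \<sigma> * c \<omega> - \<delta> \<le> \<sigma> * Sm m v} v :: ennreal)" for m \<omega> v
    define Yn :: "nat \<Rightarrow> 'w \<Rightarrow> nat \<Rightarrow> 's \<times> real \<times> real" where "Yn m \<omega> = restrict (\<lambda>k. Y (int n + int k) \<omega>) {..<m}" for m \<omega>
    have Yn_meas: "(\<lambda>\<omega>. (\<omega>, Yn m \<omega>)) \<in> P \<rightarrow>\<^sub>M F (int n) \<Otimes>\<^sub>M PT m" for m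
      unfolding Yn_def by (intro measurable_Pair id_F measurable_restrict Y_meas)
    have gm: "(\<lambda>(\<omega>, v). g m \<omega> v) \<in> borel_measurable (F (int n) \<Otimes>\<^sub>M PT m)" for m
    proof -
      have eq: "(\<lambda>(\<omega>, v). g m \<omega> v) = (\<lambda>z. if fst z \<in> C \<and> \<sigma> * c (fst z) - \<delta> \<le> \<sigma> * Sm m (snd z) then 1 else 0)"
        by (auto simp: fun_eq_iff indicator_def g_def)
      have [measurable]: "Measurable.pred (F (int n) \<Otimes>\<^sub>M PT m) (\<lambda>z. fst z \<in> C)"
        using measurable_compose[OF measurable_fst, of "\<lambda>\<omega>. \<omega> \<in> C"] C by (simp add: pred_def Measurable.pred_def)
      show ?thesis unfolding eq using c by measurable
    qed
    define a :: "nat \<Rightarrow> ennreal" where "a m = (\<integral>\<^sup>+\<omega>. g m \<omega> (Yn m \<omega>) \<partial>P)" for m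
    have g_eq: "Iop Q m (g m \<omega>) x = indicator C \<omega> * Iop Q m (indicator {v. \<sigma> * c \<omega> - \<delta> \<le> \<sigma> * Sm m v}) x" for m \<omega> x
    proof -
      have "g m \<omega> = (\<lambda>v. indicator C \<omega> * indicator {v. \<sigma> * c \<omega> - \<delta> \<le> \<sigma> * Sm m v} v)" by (simp add: g_def fun_eq_iff)
      then show ?thesis by (simp add: Iop_ind)
    qed
    have a_eq: "a m = (\<integral>\<^sup>+\<omega>. indicator C \<omega> * Iop Q m (indicator {v. \<sigma> * c \<omega> - \<delta> \<le> \<sigma> * Sm m v}) (X (int n - 1) \<omega>) \<partial>P)" for m
    proof -
      have "a m = (\<integral>\<^sup>+\<omega>. Iop Q m (g m \<omega>) (X (int n - 1) \<omega>) \<partial>P)" unfolding a_def Yn_def by (rule QM[OF _ gm]) simp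
      then show ?thesis by (simp only: g_eq)
    qed
    have v_meas: "(\<lambda>\<omega>. indicator C \<omega> * Iop Q m (indicator {v. \<sigma> * c \<omega> - \<delta> \<le> \<sigma> * Sm m v}) (X (int n - 1) \<omega>)) \<in> borel_measurable P" for m
    proof -
      have "(\<lambda>\<omega>. Iop Q m (g m \<omega>) (X (int n - 1) \<omega>)) \<in> borel_measurable (F (int n))"
        by (rule Iop_meas[OF X_F gm]) simp
      then have "(\<lambda>\<omega>. Iop Q m (g m \<omega>) (X (int n - 1) \<omega>)) \<in> borel_measurable P"
        by (rule measurable_from_subalg[OF subalg_F])
      then show ?thesis by (simp only: g_eq)
    qed
    have "1/2 * emeasure P C = (\<integral>\<^sup>+\<omega>. indicator C \<omega> * (1/2) \<partial>P)"
      using CP by (simp add: nn_integral_multc mult.commute)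
    also have "\<dots> \<le> (\<integral>\<^sup>+\<omega>. liminf (\<lambda>m. indicator C \<omega> * Iop Q m (indicator {v. \<sigma> * c \<omega> - \<delta> \<le> \<sigma> * Sm m v}) (X (int n - 1) \<omega>)) \<partial>P)"
    proof (rule nn_integral_mono)
      fix \<omega> assume w: "\<omega> \<in> space P"
      show "indicator C \<omega> * (1/2) \<le> liminf (\<lambda>m. indicator C \<omega> * Iop Q m (indicator {v. \<sigma> * c \<omega> - \<delta> \<le> \<sigma> * Sm m v}) (X (int n - 1) \<omega>))"
        using hyp[OF w _ \<delta>] by (cases "\<omega> \<in> C") auto
    qed
    also have "\<dots> \<le> liminf a" unfolding a_eq by (rule nn_integral_liminf[OF v_meas])
    also have "\<dots> \<le> limsup a" by (rule Liminf_le_Limsup) simp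
    also have "\<dots> \<le> (\<integral>\<^sup>+\<omega>. limsup (\<lambda>m. g m \<omega> (Yn m \<omega>)) \<partial>P)"
      unfolding a_def
    proof (rule nn_integral_limsup[where w="\<lambda>_. 1"])
      show "(\<lambda>\<omega>. g m \<omega> (Yn m \<omega>)) \<in> borel_measurable P" for m
        using measurable_compose[OF Yn_meas gm] by simp
      show "AE \<omega> in P. g m \<omega> (Yn m \<omega>) \<le> 1" for m by (auto simp: g_def indicator_def)
    qed (simp_all add: emeasure_space_1)
    also have "\<dots> \<le> (\<integral>\<^sup>+\<omega>. indicator {\<omega> \<in> C. \<sigma> * c \<omega> - \<delta> \<le> \<sigma> * L \<omega>} \<omega> \<partial>P)"
    proof (rule nn_integral_mono_AE)
      show "AE \<omega> in P. limsup (\<lambda>m. g m \<omega> (Yn m \<omega>)) \<le> indicator {\<omega> \<in> C. \<sigma> * c \<omega> - \<delta> \<le> \<sigma> * L \<omega>} \<omega>"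
        using conv
      proof (eventually_elim)
        case (elim \<omega>)
        show ?case
        proof (cases "\<omega> \<in> C")
          case False
          then show ?thesis by (intro Limsup_bounded) (simp add: g_def)
        next
          case True
          show ?thesis
          proof (cases "\<sigma> * c \<omega> - \<delta> \<le> \<sigma> * L \<omega>")
            case True2: True
            then show ?thesis using True by (intro Limsup_bounded) (simp add: g_def indicator_def)
          next
            case False2: False
            have "(\<lambda>m. \<sigma> * Sm m (Yn m \<omega>)) \<longlonglongrightarrow> \<sigma> * L \<omega>" unfolding Yn_def
              using elim True by (intro tendsto_mult_left) simp
            moreover have "\<sigma> * L \<omega> < \<sigma> * c \<omega> - \<delta>" using False2 by simp
            ultimately have ev: "\<forall>\<^sub>F m in sequentially. \<sigma> * Sm m (Yn m \<omega>) < \<sigma> * c \<omega> - \<delta>" by (rule order_tendstoD(2))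
            have "limsup (\<lambda>m. g m \<omega> (Yn m \<omega>)) \<le> 0"
              by (rule Limsup_bounded) (use ev in \<open>auto simp: g_def indicator_def elim!: eventually_mono\<close>)
            then show ?thesis by simp
          qed
        qed
      qed
    qed
    also have "\<dots> = emeasure P {\<omega> \<in> C. \<sigma> * c \<omega> - \<delta> \<le> \<sigma> * L \<omega>}" by (rule nn_integral_indicator[OF Eset])
    finally show ?thesis .
  qed
  define E where "E j = {\<omega> \<in> C. \<sigma> * c \<omega> - 1 / real (Suc j) \<le> \<sigma> * L \<omega>}" for j
  have "(\<lambda>j. emeasure P (E j)) \<longlonglongrightarrow> emeasure P (\<Inter>j. E j)"
  proof (rule Lim_emeasure_decseq)
    show "range E \<subseteq> sets P" unfolding E_def using Eset by auto
    show "decseq E" unfolding E_def decseq_def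
    proof (intro allI impI subsetI)
      fix i j \<omega> assume "i \<le> j" "\<omega> \<in> {\<omega> \<in> C. \<sigma> * c \<omega> - 1 / real (Suc j) \<le> \<sigma> * L \<omega>}"
      moreover have "1 / real (Suc j) \<le> 1 / real (Suc i)" using \<open>i \<le> j\<close> by (simp add: frac_le)
      ultimately show "\<omega> \<in> {\<omega> \<in> C. \<sigma> * c \<omega> - 1 / real (Suc i) \<le> \<sigma> * L \<omega>}" by auto
    qed
    show "emeasure P (E i) \<noteq> \<infinity>" for i by (simp add: emeasure_eq_measure)
  qed
  moreover have "(\<Inter>j. E j) = {\<omega> \<in> C. \<sigma> * c \<omega> \<le> \<sigma> * L \<omega>}"
  proof (intro equalityI subsetI)
    fix \<omega> assume "\<omega> \<in> (\<Inter>j. E j)"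
    then have h: "\<And>j. \<sigma> * c \<omega> - 1 / real (Suc j) \<le> \<sigma> * L \<omega>" and w: "\<omega> \<in> C" by (auto simp: E_def)
    have "\<sigma> * c \<omega> \<le> \<sigma> * L \<omega>"
    proof (rule ccontr)
      assume "\<not> \<sigma> * c \<omega> \<le> \<sigma> * L \<omega>"
      then obtain j where "inverse (real (Suc j)) < \<sigma> * c \<omega> - \<sigma> * L \<omega>" using reals_Archimedean[of "\<sigma> * c \<omega> - \<sigma> * L \<omega>"] by auto
      with h[of j] show False by (simp add: inverse_eq_divide)
    qed
    then show "\<omega> \<in> {\<omega> \<in> C. \<sigma> * c \<omega> \<le> \<sigma> * L \<omega>}" using w by simp
  next
    fix \<omega> assume "\<omega> \<in> {\<omega> \<in> C. \<sigma> * c \<omega> \<le> \<sigma> * L \<omega>}"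
    then have w: "\<sigma> * c \<omega> \<le> \<sigma> * L \<omega>" "\<omega> \<in> C" by auto
    have "\<sigma> * c \<omega> - 1 / real (Suc j) \<le> \<sigma> * L \<omega>" for j
    proof -
      have "0 < 1 / real (Suc j)" by simp
      then show ?thesis using w(1) by linarith
    qed
    then show "\<omega> \<in> (\<Inter>j. E j)" unfolding E_def using w(2) by blast
  qed
  ultimately have lim: "(\<lambda>j. emeasure P (E j)) \<longlonglongrightarrow> emeasure P {\<omega> \<in> C. \<sigma> * c \<omega> \<le> \<sigma> * L \<omega>}" by simp
  show ?thesis
    by (rule LIMSEQ_le_const[OF lim]) (use step in \<open>auto simp: E_def\<close>)
qed

end



lemma sign_lemma1: fixes p r g l R t :: real
  assumes "t < \<bar>r + g * p\<bar>" "0 < p * (r + g * p)" "g \<le> l" "R = r + p * l"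
  shows "t \<le> \<bar>R\<bar>"
proof (cases "p > 0")
  case True
  then have "r + g * p > 0" using assms(2) by (simp add: zero_less_mult_iff)
  moreover have "p * g \<le> p * l" using True assms(3) by simp
  ultimately show ?thesis using assms(1,4) by (simp add: algebra_simps)
next
  case False
  then have p: "p < 0" using assms(2) by (cases "p = 0") auto
  then have "r + g * p < 0" using assms(2) by (simp add: zero_less_mult_iff)
  moreover have "p * l \<le> p * g" using p assms(3) by (simp add: mult_le_cancel_left)
  ultimately show ?thesis using assms(1,4) by (simp add: algebra_simps)
qed

lemma sign_lemma2: fixes p r g l R t :: real
  assumes "t < \<bar>r + g * p\<bar>" "p * (r + g * p) < 0" "l \<le> g" "R = r + p * l"
  shows "t \<le> \<bar>R\<bar>"
proof (cases "p > 0")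
  case True
  then have "r + g * p < 0" using assms(2) by (simp add: mult_less_0_iff)
  moreover have "p * l \<le> p * g" using True assms(3) by simp
  ultimately show ?thesis using assms(1,4) by (simp add: algebra_simps)
next
  case False
  then have p: "p < 0" using assms(2) by (cases "p = 0") auto
  then have "r + g * p > 0" using assms(2) by (simp add: mult_less_0_iff)
  moreover have "p * g \<le> p * l" using p assms(3) by (simp add: mult_le_cancel_left)
  ultimately show ?thesis using assms(1,4) by (simp add: algebra_simps)
qed

locale fs =
  fixes M :: "'w measure" and S :: "'s measure"
    and X :: "int \<Rightarrow> 'w \<Rightarrow> 's" and Xi Rho :: "int \<Rightarrow> 'w \<Rightarrow> real"
    and H :: "'s \<Rightarrow> 's measure" and G :: "'s \<Rightarrow> 's \<Rightarrow> (real \<times> real) measure"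
    and Pm :: "'s \<Rightarrow> 'w measure"
  assumes X_meas: "\<And>i. X i \<in> M \<rightarrow>\<^sub>M S"
    and Xi_meas: "\<And>i. Xi i \<in> borel_measurable M"
    and Rho_meas: "\<And>i. Rho i \<in> borel_measurable M"
    and H_kernel: "H \<in> S \<rightarrow>\<^sub>M prob_algebra S"
    and G_kernel: "(\<lambda>(x, y). G x y) \<in> S \<Otimes>\<^sub>M S \<rightarrow>\<^sub>M prob_algebra (borel :: (real \<times> real) measure)"
    and Pm_prob: "\<And>x. x \<in> space S \<Longrightarrow> prob_space (Pm x)"
    and Pm_sets: "\<And>x. x \<in> space S \<Longrightarrow> sets (Pm x) = sets M"
    and Pm_meas: "\<And>E. E \<in> sets M \<Longrightarrow> (\<lambda>x. measure (Pm x) E) \<in> borel_measurable S"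
    and Pm_start: "\<And>x. x \<in> space S \<Longrightarrow> AE \<omega> in Pm x. X (-1) \<omega> = x"
    and Pm_markov: "\<And>x n. x \<in> space S \<Longrightarrow> n \<ge> 0 \<Longrightarrow> markov_step (Pm x) S H G X Xi Rho n"
    and Pm_R_conv: "\<And>x. x \<in> space S \<Longrightarrow> AE \<omega> in Pm x. summable (Rser_term Xi Rho \<omega>)"
begin

lemma mm: assumes x: "x \<in> space S" shows "mmp (Pm x) S X Xi Rho H G"
proof (rule mmp.intro)
  show "prob_space (Pm x)" by (rule Pm_prob[OF x])
  show "X i \<in> Pm x \<rightarrow>\<^sub>M S" for i using X_meas by (subst measurable_cong_sets[OF Pm_sets[OF x] refl])
  show "Xi i \<in> borel_measurable (Pm x)" for i using Xi_meas by (subst measurable_cong_sets[OF Pm_sets[OF x] refl])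
  show "Rho i \<in> borel_measurable (Pm x)" for i using Rho_meas by (subst measurable_cong_sets[OF Pm_sets[OF x] refl])
  show "markov_step (Pm x) S H G X Xi Rho n" if "n \<ge> 0" for n using Pm_markov[OF x that] .
qed (rule H_kernel, rule G_kernel)

lemma space_Pm: "x \<in> space S \<Longrightarrow> space (Pm x) = space M"
  using sets_eq_imp_space_eq[OF Pm_sets] .

lemma Rf_M[measurable]: "Rfull Xi Rho \<in> borel_measurable M"
proof -
  note Xi_meas[measurable] Rho_meas[measurable]
  show ?thesis unfolding Rfull_def[abs_def] Rser_term_def PiR_def by measurable
qed

lemma Rf_Pm: "x \<in> space S \<Longrightarrow> Rfull Xi Rho \<in> borel_measurable (Pm x)"
  using Rf_M by (subst measurable_cong_sets[OF Pm_sets refl])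

abbreviation "\<Gamma> \<equiv> Gam Pm (Rfull Xi Rho)"

lemma Gam_half: assumes x: "x \<in> space S"
  shows "measure (Pm x) {\<omega>\<in>space (Pm x). Rfull Xi Rho \<omega> \<le> \<Gamma> x} \<ge> 1/2"
    "measure (Pm x) {\<omega>\<in>space (Pm x). \<Gamma> x \<le> Rfull Xi Rho \<omega>} \<ge> 1/2"
  using gam_props(4,5)[OF Pm_prob[OF x] Rf_Pm[OF x]] unfolding Gam_def by simp_all

lemma Gam_meas: "\<Gamma> \<in> borel_measurable S"
proof (subst borel_measurable_iff_less, intro allI)
  fix c :: real
  define E where "E q = {\<omega> \<in> space M. Rfull Xi Rho \<omega> \<le> q}" for q
  have E: "E q \<in> sets M" for q unfolding E_def by measurable
  have "{x \<in> space S. \<Gamma> x < c} = (\<Union>q\<in>\<rat> \<inter> {..<c}. {x \<in> space S. 1/2 < measure (Pm x) (E q)})"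
  proof (intro equalityI subsetI)
    fix x assume "x \<in> {x \<in> space S. \<Gamma> x < c}"
    then have x: "x \<in> space S" and lt: "\<Gamma> x < c" by auto
    note gp = gam_props[OF Pm_prob[OF x] Rf_Pm[OF x]]
    obtain a where a: "1/2 < measure (Pm x) {\<omega>\<in>space (Pm x). Rfull Xi Rho \<omega> \<le> a}" "a < c"
      using lt unfolding Gam_def cInf_less_iff[OF gp(1,2)] by auto
    obtain q where q: "q \<in> \<rat>" "a < q" "q < c" using Rats_dense_in_real[OF a(2)] by auto
    have "1/2 < measure (Pm x) {\<omega>\<in>space (Pm x). Rfull Xi Rho \<omega> \<le> q}"
      using gp(3)[of a q] a q by auto
    then show "x \<in> (\<Union>q\<in>\<rat> \<inter> {..<c}. {x \<in> space S. 1/2 < measure (Pm x) (E q)})"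
      using q x unfolding E_def space_Pm[OF x] by auto
  next
    fix x assume "x \<in> (\<Union>q\<in>\<rat> \<inter> {..<c}. {x \<in> space S. 1/2 < measure (Pm x) (E q)})"
    then obtain q where q: "q < c" and x: "x \<in> space S" and m: "1/2 < measure (Pm x) (E q)" by auto
    note gp = gam_props[OF Pm_prob[OF x] Rf_Pm[OF x]]
    have "\<Gamma> x \<le> q" unfolding Gam_def
      by (rule cInf_lower[OF _ gp(2)]) (use m in \<open>simp add: E_def space_Pm[OF x]\<close>)
    then show "x \<in> {x \<in> space S. \<Gamma> x < c}" using q x by auto
  qed
  also have "\<dots> \<in> sets S"
  proof (rule sets.countable_UN')
    show "countable (\<rat> \<inter> {..<c})" by (intro countable_Int1 countable_rat)
    show "(\<lambda>q. {x \<in> space S. 1/2 < measure (Pm x) (E q)}) ` (\<rat> \<inter> {..<c}) \<subseteq> sets S"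
    proof
      fix A assume "A \<in> (\<lambda>q. {x \<in> space S. 1/2 < measure (Pm x) (E q)}) ` (\<rat> \<inter> {..<c})"
      then obtain q where A: "A = {x \<in> space S. 1/2 < measure (Pm x) (E q)}" by auto
      have [measurable]: "(\<lambda>x. measure (Pm x) (E q)) \<in> borel_measurable S" by (rule Pm_meas[OF E])
      show "A \<in> sets S" unfolding A by measurable
    qed
  qed
  finally show "{x \<in> space S. \<Gamma> x < c} \<in> sets S" .
qed

end



lemma half_ennreal: "(1/2::ennreal) = ennreal (1/2)"
  by (simp add: ennreal_divide_numeral ennreal_1[symmetric] del: ennreal_1)

lemma less_set_meas: fixes g :: "'a \<Rightarrow> real" and t :: real assumes g: "g \<in> borel_measurable N" shows "{\<omega>\<in>space N. t < g \<omega>} \<in> sets N"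
proof -
  have "g -` {t<..} \<inter> space N \<in> sets N" by (rule measurable_sets[OF g]) simp
  moreover have "g -` {t<..} \<inter> space N = {\<omega>\<in>space N. t < g \<omega>}" by auto
  ultimately show ?thesis by simp
qed

context fs begin

lemma conv_lemma: assumes "summable (Rser_term Xi Rho \<omega>)" "PiR Rho k \<omega> \<noteq> 0"
  shows "(\<lambda>m. Sm m (restrict (\<lambda>j. (X (int k + int j) \<omega>, Xi (int k + int j) \<omega>, Rho (int k + int j) \<omega>)) {..<m}))
     \<longlonglongrightarrow> (Rfull Xi Rho \<omega> - Rpart Xi Rho k \<omega>) / PiR Rho k \<omega>"
proof -
  have l: "(\<lambda>m. Rpart Xi Rho (m + k) \<omega>) \<longlonglongrightarrow> Rfull Xi Rho \<omega>"
    using LIMSEQ_ignore_initial_segment[OF Rpart_lim[OF assms(1)], of k] .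
  have eq: "Sm m (restrict (\<lambda>j. (X (int k + int j) \<omega>, Xi (int k + int j) \<omega>, Rho (int k + int j) \<omega>)) {..<m})
      = (Rpart Xi Rho (m + k) \<omega> - Rpart Xi Rho k \<omega>) / PiR Rho k \<omega>" for m
    using Rpart_decomp[of Xi Rho k m \<omega>] assms(2) unfolding Sm_restrict by (simp add: add.commute)
  show ?thesis unfolding eq by (intro tendsto_divide tendsto_diff l tendsto_const assms(2))
qed

lemma hyp_lemma: assumes x: "x \<in> space S" and \<delta>: "\<delta> > 0" and \<sigma>: "\<sigma> = 1 \<or> \<sigma> = -1"
  shows "1/2 \<le> liminf (\<lambda>m. Iop (Qk H G S) m (indicator {v. \<sigma> * \<Gamma> x - \<delta> \<le> \<sigma> * Sm m v}) x)"
proof -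
  interpret Px: mmp "Pm x" S X Xi Rho H G by (rule mm[OF x])
  interpret PP: prob_space "Pm x" by (rule Pm_prob[OF x])
  have conv: "AE \<omega> in Pm x. (\<lambda>m. Rpart Xi Rho m \<omega>) \<longlonglongrightarrow> Rfull Xi Rho \<omega>"
    using Pm_R_conv[OF x] by eventually_elim (rule Rpart_lim)
  have k: "emeasure (Pm x) {\<omega> \<in> space (Pm x). \<sigma> * \<Gamma> x \<le> \<sigma> * Rfull Xi Rho \<omega>} \<le>
      liminf (\<lambda>m. Iop (Qk H G S) m (indicator {v. \<sigma> * \<Gamma> x - \<delta> \<le> \<sigma> * Sm m v}) x)"
    by (rule Px.K_px[OF x Pm_start[OF x] conv Rf_Pm[OF x] \<delta>])
  have "1/2 \<le> measure (Pm x) {\<omega> \<in> space (Pm x). \<sigma> * \<Gamma> x \<le> \<sigma> * Rfull Xi Rho \<omega>}"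
    using \<sigma> Gam_half[OF x] by auto
  then have "ennreal (1/2) \<le> ennreal (measure (Pm x) {\<omega> \<in> space (Pm x). \<sigma> * \<Gamma> x \<le> \<sigma> * Rfull Xi Rho \<omega>})"
    by (rule ennreal_leI)
  then have "1/2 \<le> emeasure (Pm x) {\<omega> \<in> space (Pm x). \<sigma> * \<Gamma> x \<le> \<sigma> * Rfull Xi Rho \<omega>}"
    unfolding half_ennreal PP.emeasure_eq_measure .
  then show ?thesis using k by (rule order.trans)
qed

end


context fs begin

definition "Aset z t k = {\<omega> \<in> space (Pm z). t < \<bar>Rpart Xi Rho k \<omega> + \<Gamma> (X (int k - 1) \<omega>) * PiR Rho k \<omega>\<bar>}"

lemma A_F: assumes z: "z \<in> space S" and jk: "j \<le> k"
  shows "Aset z t j \<in> sets (mmp.F (Pm z) S X Xi Rho (int k))"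
proof -
  interpret Z: mmp "Pm z" S X Xi Rho H G by (rule mm[OF z])
  have Rp: "(\<lambda>\<omega>. Rpart Xi Rho j \<omega>) \<in> borel_measurable (Z.F (int k))"
    unfolding Rpart_def PiR_def using jk
    by (intro borel_measurable_sum borel_measurable_times borel_measurable_prod Z.Xi_F Z.Rho_F) auto
  have Pi: "(\<lambda>\<omega>. PiR Rho j \<omega>) \<in> borel_measurable (Z.F (int k))"
    unfolding PiR_def using jk by (intro borel_measurable_prod Z.Rho_F) auto
  have Gm: "(\<lambda>\<omega>. \<Gamma> (X (int j - 1) \<omega>)) \<in> borel_measurable (Z.F (int k))"
    by (rule measurable_compose[OF Z.X_F Gam_meas]) (use jk in simp)
  have "(\<lambda>\<omega>. \<bar>Rpart Xi Rho j \<omega> + \<Gamma> (X (int j - 1) \<omega>) * PiR Rho j \<omega>\<bar>) \<in> borel_measurable (Z.F (int k))"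
    by (intro borel_measurable_abs borel_measurable_add borel_measurable_times Rp Pi Gm)
  from less_set_meas[OF this, of t] show ?thesis unfolding Aset_def by simp
qed

lemma claim: assumes z: "z \<in> space S" and t: "t > 0"
  shows "1/2 * emeasure (Pm z) (disjointed (Aset z t) k) \<le>
     emeasure (Pm z) (disjointed (Aset z t) k \<inter> {\<omega> \<in> space (Pm z). t \<le> \<bar>Rfull Xi Rho \<omega>\<bar>})"
proof -
  interpret Z: mmp "Pm z" S X Xi Rho H G by (rule mm[OF z])
  interpret PZ: prob_space "Pm z" by (rule Pm_prob[OF z])
  let ?P = "Pm z"
  let ?Fk = "Z.F (int k)"
  define D where "D = disjointed (Aset z t) k"
  define Gs where "Gs = {\<omega> \<in> space (Pm z). t \<le> \<bar>Rfull Xi Rho \<omega>\<bar>}"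
  define gm where "gm \<omega> = \<Gamma> (X (int k - 1) \<omega>)" for \<omega>
  define s where "s \<omega> = Rpart Xi Rho k \<omega> + gm \<omega> * PiR Rho k \<omega>" for \<omega>
  define L where "L \<omega> = (Rfull Xi Rho \<omega> - Rpart Xi Rho k \<omega>) / PiR Rho k \<omega>" for \<omega>
  define C0 where "C0 = D \<inter> {\<omega> \<in> space ?P. PiR Rho k \<omega> = 0}"
  define C1 where "C1 = D \<inter> {\<omega> \<in> space ?P. 0 < PiR Rho k \<omega> * s \<omega>}"
  define C2 where "C2 = D \<inter> {\<omega> \<in> space ?P. PiR Rho k \<omega> * s \<omega> < 0}"
  have Rp: "(\<lambda>\<omega>. Rpart Xi Rho k \<omega>) \<in> borel_measurable ?Fk"
    unfolding Rpart_def PiR_def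
    by (intro borel_measurable_sum borel_measurable_times borel_measurable_prod Z.Xi_F Z.Rho_F) auto
  have Pi: "(\<lambda>\<omega>. PiR Rho k \<omega>) \<in> borel_measurable ?Fk"
    unfolding PiR_def by (intro borel_measurable_prod Z.Rho_F) auto
  have Gm: "gm \<in> borel_measurable ?Fk"
    unfolding gm_def by (rule measurable_compose[OF Z.X_F Gam_meas]) simp
  have sm: "s \<in> borel_measurable ?Fk" unfolding s_def by (intro borel_measurable_add borel_measurable_times Rp Pi Gm)
  have DF: "D \<in> sets ?Fk"
  proof -
    have "Aset z t k - (\<Union>i\<in>{0..<k}. Aset z t i) \<in> sets ?Fk"
      by (intro sets.Diff sets.finite_UN A_F[OF z]) auto
    then show ?thesis unfolding D_def disjointed_def .
  qed
  have sub_space: "{\<omega> \<in> space ?P. p \<omega>} \<in> sets ?Fk \<Longrightarrow> D \<inter> {\<omega> \<in> space ?P. p \<omega>} \<in> sets ?Fk" for p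
    using DF by auto
  have C0F: "C0 \<in> sets ?Fk" unfolding C0_def
  proof (rule sub_space)
    have "{\<omega> \<in> space ?Fk. PiR Rho k \<omega> = 0} \<in> sets ?Fk" using Pi by measurable
    then show "{\<omega> \<in> space ?P. PiR Rho k \<omega> = 0} \<in> sets ?Fk" by simp
  qed
  have C1F: "C1 \<in> sets ?Fk" unfolding C1_def
  proof (rule sub_space)
    have "{\<omega> \<in> space ?Fk. 0 < PiR Rho k \<omega> * s \<omega>} \<in> sets ?Fk" using Pi sm by measurable
    then show "{\<omega> \<in> space ?P. 0 < PiR Rho k \<omega> * s \<omega>} \<in> sets ?Fk" by simp
  qed
  have C2F: "C2 \<in> sets ?Fk" unfolding C2_def
  proof (rule sub_space)
    have "{\<omega> \<in> space ?Fk. PiR Rho k \<omega> * s \<omega> < 0} \<in> sets ?Fk" using Pi sm by measurable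
    then show "{\<omega> \<in> space ?P. PiR Rho k \<omega> * s \<omega> < 0} \<in> sets ?Fk" by simp
  qed
  have toP: "A \<in> sets ?Fk \<Longrightarrow> A \<in> sets ?P" for A using Z.sets_F_sub by auto
  have DA: "D \<subseteq> Aset z t k" unfolding D_def by (rule disjointed_subset)
  have cover: "D = C0 \<union> C1 \<union> C2"
  proof (intro equalityI subsetI)
    fix \<omega> assume w: "\<omega> \<in> D"
    then have "\<omega> \<in> space ?P" "t < \<bar>s \<omega>\<bar>" using DA by (auto simp: Aset_def s_def gm_def)
    then show "\<omega> \<in> C0 \<union> C1 \<union> C2" using w t unfolding C0_def C1_def C2_def
      by (cases "PiR Rho k \<omega> = 0") (auto simp: linorder_neq_iff mult_less_0_iff zero_less_mult_iff)
  qed (auto simp: C0_def C1_def C2_def)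
  have Rf_P: "Rfull Xi Rho \<in> borel_measurable ?P" by (rule Rf_Pm[OF z])
  have LP: "L \<in> borel_measurable ?P" unfolding L_def
    by (intro borel_measurable_divide borel_measurable_diff Rf_P measurable_from_subalg[OF Z.subalg_F Rp] measurable_from_subalg[OF Z.subalg_F Pi])
  have conv: "AE \<omega> in ?P. \<omega> \<in> C \<longrightarrow> (\<lambda>m. Sm m (restrict (\<lambda>j. Z.Y (int k + int j) \<omega>) {..<m})) \<longlonglongrightarrow> L \<omega>"
    if CC: "C \<subseteq> {\<omega>. PiR Rho k \<omega> \<noteq> 0}" for C
    using Pm_R_conv[OF z]
  proof eventually_elim
    case (elim \<omega>)
    show ?case using conv_lemma[OF elim] CC unfolding L_def Z.Y_def by auto
  qed
  have E1: "1/2 * emeasure ?P C1 \<le> emeasure ?P {\<omega> \<in> C1. 1 * gm \<omega> \<le> 1 * L \<omega>}"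
  proof (rule Z.K_main[OF C1F Gm LP conv])
    show "C1 \<subseteq> {\<omega>. PiR Rho k \<omega> \<noteq> 0}" unfolding C1_def by auto
    fix \<omega> and \<delta> :: real assume w: "\<omega> \<in> space ?P" and "\<omega> \<in> C1" and \<delta>: "\<delta> > 0"
    show "1/2 \<le> liminf (\<lambda>m. Iop (Qk H G S) m (indicator {v. 1 * gm \<omega> - \<delta> \<le> 1 * Sm m v}) (X (int k - 1) \<omega>))"
      unfolding gm_def using hyp_lemma[OF Z.XS[OF w] \<delta>, of 1] by simp
  qed
  have E2: "1/2 * emeasure ?P C2 \<le> emeasure ?P {\<omega> \<in> C2. -1 * gm \<omega> \<le> -1 * L \<omega>}"
  proof (rule Z.K_main[OF C2F Gm LP conv])
    show "C2 \<subseteq> {\<omega>. PiR Rho k \<omega> \<noteq> 0}" unfolding C2_def by auto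
    fix \<omega> and \<delta> :: real assume w: "\<omega> \<in> space ?P" and "\<omega> \<in> C2" and \<delta>: "\<delta> > 0"
    show "1/2 \<le> liminf (\<lambda>m. Iop (Qk H G S) m (indicator {v. -1 * gm \<omega> - \<delta> \<le> -1 * Sm m v}) (X (int k - 1) \<omega>))"
      unfolding gm_def using hyp_lemma[OF Z.XS[OF w] \<delta>, of "-1"] by simp
  qed
  define E1s where "E1s = {\<omega> \<in> C1. 1 * gm \<omega> \<le> 1 * L \<omega>}"
  define E2s where "E2s = {\<omega> \<in> C2. -1 * gm \<omega> \<le> -1 * L \<omega>}"
  have E1F: "E1s \<in> sets ?P"
  proof -
    have "{\<omega> \<in> space ?P. 1 * gm \<omega> \<le> 1 * L \<omega>} \<in> sets ?P"
      using measurable_from_subalg[OF Z.subalg_F Gm] LP by measurable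
    then have "C1 \<inter> {\<omega> \<in> space ?P. 1 * gm \<omega> \<le> 1 * L \<omega>} \<in> sets ?P" using toP[OF C1F] by auto
    moreover have "C1 \<inter> {\<omega> \<in> space ?P. 1 * gm \<omega> \<le> 1 * L \<omega>} = E1s" unfolding E1s_def C1_def by auto
    ultimately show ?thesis by simp
  qed
  have E2F: "E2s \<in> sets ?P"
  proof -
    have "{\<omega> \<in> space ?P. -1 * gm \<omega> \<le> -1 * L \<omega>} \<in> sets ?P"
      using measurable_from_subalg[OF Z.subalg_F Gm] LP by measurable
    then have "C2 \<inter> {\<omega> \<in> space ?P. -1 * gm \<omega> \<le> -1 * L \<omega>} \<in> sets ?P" using toP[OF C2F] by auto
    moreover have "C2 \<inter> {\<omega> \<in> space ?P. -1 * gm \<omega> \<le> -1 * L \<omega>} = E2s" unfolding E2s_def C2_def by auto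
    ultimately show ?thesis by simp
  qed
  have C0G: "C0 \<subseteq> D \<inter> Gs"
  proof
    fix \<omega> assume w: "\<omega> \<in> C0"
    then have "PiR Rho k \<omega> = 0" "\<omega> \<in> D" "\<omega> \<in> space ?P" unfolding C0_def by auto
    moreover then have "t < \<bar>Rpart Xi Rho k \<omega>\<bar>" using DA by (auto simp: Aset_def)
    ultimately show "\<omega> \<in> D \<inter> Gs" unfolding Gs_def using Rfull_PiR0[of Rho k \<omega> Xi] by auto
  qed
  have E1G: "E1s \<subseteq> D \<inter> Gs"
  proof
    fix \<omega> assume w: "\<omega> \<in> E1s"
    then have a: "\<omega> \<in> D" "\<omega> \<in> space ?P" "0 < PiR Rho k \<omega> * s \<omega>" "gm \<omega> \<le> L \<omega>"
      unfolding E1s_def C1_def by auto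
    then have "PiR Rho k \<omega> \<noteq> 0" by auto
    then have R: "Rfull Xi Rho \<omega> = Rpart Xi Rho k \<omega> + PiR Rho k \<omega> * L \<omega>" unfolding L_def by simp
    have "t < \<bar>s \<omega>\<bar>" using a DA by (auto simp: Aset_def s_def gm_def)
    then have "t \<le> \<bar>Rfull Xi Rho \<omega>\<bar>" using sign_lemma1[OF _ _ a(4) R] a(3) unfolding s_def by blast
    then show "\<omega> \<in> D \<inter> Gs" using a unfolding Gs_def by auto
  qed
  have E2G: "E2s \<subseteq> D \<inter> Gs"
  proof
    fix \<omega> assume w: "\<omega> \<in> E2s"
    then have a: "\<omega> \<in> D" "\<omega> \<in> space ?P" "PiR Rho k \<omega> * s \<omega> < 0" "L \<omega> \<le> gm \<omega>"
      unfolding E2s_def C2_def by auto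
    then have "PiR Rho k \<omega> \<noteq> 0" by auto
    then have R: "Rfull Xi Rho \<omega> = Rpart Xi Rho k \<omega> + PiR Rho k \<omega> * L \<omega>" unfolding L_def by simp
    have "t < \<bar>s \<omega>\<bar>" using a DA by (auto simp: Aset_def s_def gm_def)
    then have "t \<le> \<bar>Rfull Xi Rho \<omega>\<bar>" using sign_lemma2[OF _ _ a(4) R] a(3) unfolding s_def by blast
    then show "\<omega> \<in> D \<inter> Gs" using a unfolding Gs_def by auto
  qed
  have C0P: "C0 \<in> sets ?P" and C1P: "C1 \<in> sets ?P" and C2P: "C2 \<in> sets ?P"
    using toP C0F C1F C2F by auto
  have d01: "C0 \<inter> C1 = {}" "(C0 \<union> C1) \<inter> C2 = {}" unfolding C0_def C1_def C2_def by auto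
  have eD: "emeasure ?P D = emeasure ?P C0 + emeasure ?P C1 + emeasure ?P C2"
    unfolding cover plus_emeasure[OF C0P C1P d01(1)] by (rule plus_emeasure[symmetric]) (use C0P C1P C2P d01 in auto)
  have dE: "C0 \<inter> E1s = {}" "(C0 \<union> E1s) \<inter> E2s = {}" unfolding C0_def C1_def C2_def E1s_def E2s_def by auto
  have eE: "emeasure ?P (C0 \<union> E1s \<union> E2s) = emeasure ?P C0 + emeasure ?P E1s + emeasure ?P E2s"
    unfolding plus_emeasure[OF C0P E1F dE(1)] by (rule plus_emeasure[symmetric]) (use C0P E1F E2F dE in auto)
  have h0: "1/2 * emeasure ?P C0 \<le> emeasure ?P C0"
  proof -
    have hl: "(1/2::ennreal) \<le> 1" unfolding half_ennreal by (subst ennreal_1[symmetric], rule ennreal_leI) simp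
    have "1/2 * emeasure ?P C0 \<le> 1 * emeasure ?P C0" by (intro mult_right_mono hl) simp
    then show ?thesis by simp
  qed
  have "1/2 * emeasure ?P D = 1/2 * emeasure ?P C0 + 1/2 * emeasure ?P C1 + 1/2 * emeasure ?P C2"
    unfolding eD by (simp add: distrib_left)
  also have "\<dots> \<le> emeasure ?P C0 + emeasure ?P E1s + emeasure ?P E2s"
    using h0 E1 E2 unfolding E1s_def E2s_def by (intro add_mono) auto
  also have "\<dots> = emeasure ?P (C0 \<union> E1s \<union> E2s)" using eE by simp
  also have "\<dots> \<le> emeasure ?P (D \<inter> Gs)"
  proof (rule emeasure_mono)
    show "C0 \<union> E1s \<union> E2s \<subseteq> D \<inter> Gs" using C0G E1G E2G by auto
    have "Gs \<in> sets ?P" unfolding Gs_def using Rf_P by measurable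
    then show "D \<inter> Gs \<in> sets ?P" using toP[OF DF] by auto
  qed
  finally show ?thesis unfolding D_def Gs_def .
qed

end


context fs begin

lemma main_fs: assumes z_in: "z \<in> space S" and t_pos: "t > 0"
  shows "measure (Pm z) {\<omega> \<in> space (Pm z). \<bar>Rfull Xi Rho \<omega>\<bar> \<ge> t}
         \<ge> 1/2 * measure (Pm z) {\<omega> \<in> space (Pm z).
               \<exists>n::nat. \<bar>Rpart Xi Rho n \<omega> + Gam Pm (Rfull Xi Rho) (X (int n - 1) \<omega>) * PiR Rho n \<omega>\<bar> > t}"
proof -
  interpret Z: mmp "Pm z" S X Xi Rho H G by (rule mm[OF z_in])
  interpret PZ: prob_space "Pm z" by (rule Pm_prob[OF z_in])
  let ?P = "Pm z"
  define A where "A = Aset z t"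
  define D where "D = disjointed A"
  define Gs where "Gs = {\<omega> \<in> space (Pm z). t \<le> \<bar>Rfull Xi Rho \<omega>\<bar>}"
  have toP: "B \<in> sets (Z.F k) \<Longrightarrow> B \<in> sets ?P" for B k using Z.sets_F_sub by auto
  have AP: "A k \<in> sets ?P" for k unfolding A_def by (rule toP[OF A_F[OF z_in order.refl]])
  have DP: "D k \<in> sets ?P" for k unfolding D_def disjointed_def using AP by (intro sets.Diff sets.finite_UN) auto
  have GsP: "Gs \<in> sets ?P" unfolding Gs_def using Rf_Pm[OF z_in] by measurable
  have U: "{\<omega> \<in> space (Pm z). \<exists>n::nat. \<bar>Rpart Xi Rho n \<omega> + Gam Pm (Rfull Xi Rho) (X (int n - 1) \<omega>) * PiR Rho n \<omega>\<bar> > t}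
      = (\<Union>k. D k)" unfolding D_def UN_disjointed_eq A_def Aset_def by auto
  have dD: "disjoint_family D" unfolding D_def by (rule disjoint_family_disjointed)
  have dDG: "disjoint_family (\<lambda>k. D k \<inter> Gs)" using dD unfolding disjoint_family_on_def by auto
  have "1/2 * emeasure ?P (\<Union>k. D k) = 1/2 * (\<Sum>k. emeasure ?P (D k))"
  proof -
    have "range D \<subseteq> sets ?P" using DP by auto
    then show ?thesis using suminf_emeasure[OF _ dD, of ?P] by simp
  qed
  also have "\<dots> = (\<Sum>k. 1/2 * emeasure ?P (D k))" by simp
  also have "\<dots> \<le> (\<Sum>k. emeasure ?P (D k \<inter> Gs))"
    by (intro suminf_le summableI) (use claim[OF z_in t_pos] in \<open>simp add: D_def A_def Gs_def\<close>)
  also have "\<dots> = emeasure ?P (\<Union>k. D k \<inter> Gs)"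
    by (rule suminf_emeasure) (use DP GsP dDG in auto)
  also have "\<dots> \<le> emeasure ?P Gs" by (rule emeasure_mono) (use GsP in auto)
  finally have "1/2 * emeasure ?P (\<Union>k. D k) \<le> emeasure ?P Gs" .
  moreover have "1/2 * emeasure ?P (\<Union>k. D k) = ennreal (1/2 * measure ?P (\<Union>k. D k))"
    unfolding half_ennreal PZ.emeasure_eq_measure by (rule ennreal_mult[symmetric]) auto
  ultimately have "ennreal (1/2 * measure ?P (\<Union>k. D k)) \<le> ennreal (measure ?P Gs)"
    unfolding PZ.emeasure_eq_measure by simp
  then have "1/2 * measure ?P (\<Union>k. D k) \<le> measure ?P Gs"
    by (subst (asm) ennreal_le_iff) auto
  then show ?thesis unfolding U Gs_def by simp
qed

end

theorem lemma5p2: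
  fixes M :: "'w measure" and S :: "'s measure"
    and X :: "int \<Rightarrow> 'w \<Rightarrow> 's" and Xi Rho :: "int \<Rightarrow> 'w \<Rightarrow> real"
    and H :: "'s \<Rightarrow> 's measure" and G :: "'s \<Rightarrow> 's \<Rightarrow> (real \<times> real) measure"
    and Pm :: "'s \<Rightarrow> 'w measure"
    and t :: real and z :: 's
  assumes M: "prob_space M"
    and X_meas: "\<And>i. X i \<in> M \<rightarrow>\<^sub>M S"
    and Xi_meas: "\<And>i. Xi i \<in> borel_measurable M"
    and Rho_meas: "\<And>i. Rho i \<in> borel_measurable M"
    and H_kernel: "H \<in> S \<rightarrow>\<^sub>M prob_algebra S"
    and G_kernel: "(\<lambda>(x, y). G x y) \<in> S \<Otimes>\<^sub>M S \<rightarrow>\<^sub>M prob_algebra (borel :: (real \<times> real) measure)"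
    and stationary: "\<And>k. distr M (PiM UNIV (\<lambda>_. S \<Otimes>\<^sub>M borel \<Otimes>\<^sub>M borel)) (proc_shift X Xi Rho k)
                       = distr M (PiM UNIV (\<lambda>_. S \<Otimes>\<^sub>M borel \<Otimes>\<^sub>M borel)) (proc_shift X Xi Rho 0)"
    and markov: "\<And>n. markov_step M S H G X Xi Rho n"
    and R_conv: "AE \<omega> in M. summable (Rser_term Xi Rho \<omega>)"
    and Pm_prob: "\<And>x. x \<in> space S \<Longrightarrow> prob_space (Pm x)"
    and Pm_sets: "\<And>x. x \<in> space S \<Longrightarrow> sets (Pm x) = sets M"
    and Pm_meas: "\<And>E. E \<in> sets M \<Longrightarrow> (\<lambda>x. measure (Pm x) E) \<in> borel_measurable S"
    and Pm_cond: "\<And>E A. E \<in> sets (proc_sigma M S X Xi Rho {-1..}) \<Longrightarrow> A \<in> sets S \<Longrightarrow>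
         measure M (E \<inter> {\<omega> \<in> space M. X (-1) \<omega> \<in> A})
           = (\<integral>x. indicator A x * measure (Pm x) E \<partial>(distr M S (X (-1))))"
    and Pm_start: "\<And>x. x \<in> space S \<Longrightarrow> AE \<omega> in Pm x. X (-1) \<omega> = x"
    and Pm_markov: "\<And>x n. x \<in> space S \<Longrightarrow> n \<ge> 0 \<Longrightarrow> markov_step (Pm x) S H G X Xi Rho n"
    and Pm_R_conv: "\<And>x. x \<in> space S \<Longrightarrow> AE \<omega> in Pm x. summable (Rser_term Xi Rho \<omega>)"
    and t_pos: "t > 0"
    and z_in: "z \<in> space S"
  shows "measure (Pm z) {\<omega> \<in> space (Pm z). \<bar>Rfull Xi Rho \<omega>\<bar> \<ge> t}
         \<ge> 1/2 * measure (Pm z) {\<omega> \<in> space (Pm z).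
               \<exists>n::nat. \<bar>Rpart Xi Rho n \<omega> + Gam Pm (Rfull Xi Rho) (X (int n - 1) \<omega>) * PiR Rho n \<omega>\<bar> > t}"
proof -
  have "fs M S X Xi Rho H G Pm"
    by (rule fs.intro) (fact X_meas Xi_meas Rho_meas H_kernel G_kernel Pm_prob Pm_sets Pm_meas Pm_start Pm_markov Pm_R_conv)+
  then show ?thesis by (rule fs.main_fs[OF _ z_in t_pos])
qed


end
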